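(* Let $V\subseteq\mathcal V$ be finite and $\mathcal E,\mathcal F\in\mathit{DProg}(V)$. Then: (1) $\mathcal E\le_P^p\mathcal F$ if and only if $\mathrm{span}(\mathcal F)\subseteq\mathrm{span}(\mathcal E)$; (2) $\mathcal E\le_T^p\mathcal F$ if and only if $T_{\mathcal E}\sqsubseteq T_{\mathcal F}$ and $\mathrm{span}(\mathcal F\circ\mathcal P_{T_{\mathcal E}})\subseteq\mathrm{span}(\mathcal E\circ\mathcal P_{T_{\mathcal E}})$; (3) if both $\mathcal E$ and $\mathcal F$ are trace-preserving, then $\mathcal E\le_T^p\mathcal F$ iff $\mathcal E\le_P^p\mathcal F$.
   Context: $\mathcal V$ is a countably infinite set of quantum variables, each with state space $\mathbb C^2$; for finite $V\subseteq\mathcal V$, $\mathcal H_V=\bigotimes_{q\in V}\mathcal H_q$ with identity $I_V$. $\mathcal D(\mathcal H)$ denotes partial density operators (positive, trace $\le1$), $\mathcal S(\mathcal H)$ the projectors on $\mathcal H$, $\sqsubseteq$ the Löwner order; projectors are identified with their images (subspaces), so $P\sqsubseteq Q$ means subspace inclusion. $\mathit{DProg}(V)$ is the set of completely positive trace-nonincreasing super-operators on $\mathcal L(\mathcal H_V)$. Operators/super-operators on subsystems are implicitly extended to larger systems by tensoring with identities. For finite $W$ and $P,Q\in\mathcal S(\mathcal H_W)$: $\mathcal E\models_{tot}(P,Q)$ iff for every finite $X\supseteq V\cup W$ and $\rho\in\mathcal D(\mathcal H_X)$, ${\rm tr}(P\rho)\le{\rm tr}(Q\mathcal E(\rho))$;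 $\mathcal E\models_{par}(P,Q)$ iff for all such $X,\rho$, ${\rm tr}(P\rho)\le{\rm tr}(Q\mathcal E(\rho))+{\rm tr}(\rho)-{\rm tr}(\mathcal E(\rho))$. $\mathcal E\le_T^p\mathcal F$ iff for every finite $W$ and all $P,Q\in\mathcal S(\mathcal H_W)$, $\mathcal E\models_{tot}(P,Q)$ implies $\mathcal F\models_{tot}(P,Q)$; $\le_P^p$ likewise with $\models_{par}$. For a completely positive super-operator $\mathcal G$ with Kraus operators $\{G_i\}$ (i.e. $\mathcal G(A)=\sum_iG_iAG_i^\dagger$), $\mathrm{span}(\mathcal G)$ is the linear span of $\{G_i\}$ in $\mathcal L(\mathcal H_V)$ (independent of the Kraus representation). The termination space is $T_{\mathcal E}=\{|\psi\rangle\in\mathcal H_V:{\rm tr}(\mathcal E(|\psi\rangle\langle\psi|))={\rm tr}(|\psi\rangle\langle\psi|)\}$, a subspace identified with its projector, and $\mathcal P_{T_{\mathcal E}}$ is the super-operator $\rho\mapsto T_{\mathcal E}\rho T_{\mathcal E}$. *)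

theory Defs
  imports Complex_Main
begin

text \<open>Quantum variables are natural numbers (a countably infinite set), each with
state space C^2.  For a finite set X of variables, the computational basis of H_X is
indexed by the assignments X -> bool, represented as functions nat => bool that are
False outside X.  Operators on H_X are matrices indexed by such assignments; entries
outside the basis of X are irrelevant (junk).\<close>

type_synonym asgn = "nat \<Rightarrow> bool"
type_synonym qop = "asgn \<Rightarrow> asgn \<Rightarrow> complex"
type_synonym qvec = "asgn \<Rightarrow> complex"
type_synonym superop = "qop \<Rightarrow> qop"

definition asg :: "nat set \<Rightarrow> asgn set" where
  "asg X = {f. \<forall>q. q \<notin> X \<longrightarrow> \<not> f q}"

definition restr :: "nat set \<Rightarrow> asgn \<Rightarrow> asgn" where
  "restr W s = (\<lambda>q. q \<in> W \<and> s q)"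

definition merge :: "nat set \<Rightarrow> asgn \<Rightarrow> asgn \<Rightarrow> asgn" where
  "merge V a s = (\<lambda>q. if q \<in> V then a q else s q)"

definition clip :: "nat set \<Rightarrow> qop \<Rightarrow> qop" where
  "clip X A = (\<lambda>s t. if s \<in> asg X \<and> t \<in> asg X then A s t else 0)"

definition mmul :: "nat set \<Rightarrow> qop \<Rightarrow> qop \<Rightarrow> qop" where
  "mmul X A B = (\<lambda>s t. \<Sum>u\<in>asg X. A s u * B u t)"

definition adj :: "qop \<Rightarrow> qop" where
  "adj A = (\<lambda>s t. cnj (A t s))"

definition qtrace :: "nat set \<Rightarrow> qop \<Rightarrow> complex" where
  "qtrace X A = (\<Sum>s\<in>asg X. A s s)"

definition positive :: "nat set \<Rightarrow> qop \<Rightarrow> bool" where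
  "positive X A \<longleftrightarrow> (\<forall>\<psi>::qvec.
     let z = (\<Sum>s\<in>asg X. \<Sum>t\<in>asg X. cnj (\<psi> s) * A s t * \<psi> t) in Im z = 0 \<and> 0 \<le> Re z)"

definition density :: "nat set \<Rightarrow> qop \<Rightarrow> bool" where
  "density X \<rho> \<longleftrightarrow> positive X \<rho> \<and> Re (qtrace X \<rho>) \<le> 1"

definition projector :: "nat set \<Rightarrow> qop \<Rightarrow> bool" where
  "projector X P \<longleftrightarrow> (\<forall>s\<in>asg X. \<forall>t\<in>asg X. mmul X P P s t = P s t \<and> adj P s t = P s t)"

text \<open>A \<otimes> I_{X-W} for an operator A on H_W, W \<subseteq> X\<close>
definition ext_op :: "nat set \<Rightarrow> nat set \<Rightarrow> qop \<Rightarrow> qop" where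
  "ext_op W X A = (\<lambda>s t. A (restr W s) (restr W t) *
       (if \<forall>q\<in>X - W. s q = t q then 1 else 0))"

text \<open>E \<otimes> id_{X-V} for a super-operator E on L(H_V), V \<subseteq> X: E acts on each block\<close>
definition ext_so :: "nat set \<Rightarrow> superop \<Rightarrow> superop" where
  "ext_so V E = (\<lambda>\<rho> s t. E (\<lambda>a b. \<rho> (merge V a s) (merge V b t)) (restr V s) (restr V t))"

definition is_kraus :: "nat set \<Rightarrow> superop \<Rightarrow> qop list \<Rightarrow> bool" where
  "is_kraus V G Ks \<longleftrightarrow> (\<forall>A. \<forall>s\<in>asg V. \<forall>t\<in>asg V.
     G A s t = (\<Sum>K\<leftarrow>Ks. mmul V (mmul V K A) (adj K) s t))"

definition completely_positive :: "nat set \<Rightarrow> superop \<Rightarrow> bool" where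
  "completely_positive V G \<longleftrightarrow> (\<exists>Ks. is_kraus V G Ks)"

definition trace_nonincreasing :: "nat set \<Rightarrow> superop \<Rightarrow> bool" where
  "trace_nonincreasing V G \<longleftrightarrow>
     (\<forall>\<rho>. positive V \<rho> \<longrightarrow> Re (qtrace V (G \<rho>)) \<le> Re (qtrace V \<rho>))"

definition trace_preserving :: "nat set \<Rightarrow> superop \<Rightarrow> bool" where
  "trace_preserving V G \<longleftrightarrow> (\<forall>\<rho>. qtrace V (G \<rho>) = qtrace V \<rho>)"

definition DProg :: "nat set \<Rightarrow> superop set" where
  "DProg V = {G. completely_positive V G \<and> trace_nonincreasing V G}"

definition cspan :: "qop set \<Rightarrow> qop set" where
  "cspan S = {A. \<exists>F c. finite F \<and> F \<subseteq> S \<and> A = (\<lambda>s t. \<Sum>K\<in>F. c K * K s t)}"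

text \<open>span(G): span of the Kraus operators of G (independent of the chosen representation)\<close>
definition kraus_span :: "nat set \<Rightarrow> superop \<Rightarrow> qop set" where
  "kraus_span V G = cspan (clip V ` set (SOME Ks. is_kraus V G Ks))"

definition outer :: "qvec \<Rightarrow> qvec \<Rightarrow> qop" where
  "outer \<psi> \<phi> = (\<lambda>s t. \<psi> s * cnj (\<phi> t))"

definition vec_in :: "nat set \<Rightarrow> qvec \<Rightarrow> bool" where
  "vec_in V \<psi> \<longleftrightarrow> (\<forall>s. s \<notin> asg V \<longrightarrow> \<psi> s = 0)"

definition apply_op :: "nat set \<Rightarrow> qop \<Rightarrow> qvec \<Rightarrow> qvec" where
  "apply_op V P \<psi> = (\<lambda>s. \<Sum>t\<in>asg V. P s t * \<psi> t)"

definition term_space :: "nat set \<Rightarrow> superop \<Rightarrow> qvec set" where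
  "term_space V E = {\<psi>. vec_in V \<psi> \<and>
      qtrace V (E (outer \<psi> \<psi>)) = qtrace V (outer \<psi> \<psi>)}"

definition term_proj :: "nat set \<Rightarrow> superop \<Rightarrow> qop" where
  "term_proj V E = (THE P. P = clip V P \<and> projector V P \<and>
      {\<psi>. vec_in V \<psi> \<and> apply_op V P \<psi> = \<psi>} = term_space V E)"

definition proj_so :: "nat set \<Rightarrow> qop \<Rightarrow> superop" where
  "proj_so V P = (\<lambda>\<rho>. mmul V (mmul V P \<rho>) P)"

definition sat_tot :: "nat set \<Rightarrow> nat set \<Rightarrow> superop \<Rightarrow> qop \<Rightarrow> qop \<Rightarrow> bool" where
  "sat_tot V W E P Q \<longleftrightarrow> (\<forall>X \<rho>. finite X \<longrightarrow> V \<union> W \<subseteq> X \<longrightarrow> density X \<rho> \<longrightarrow>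
     Re (qtrace X (mmul X (ext_op W X P) \<rho>))
       \<le> Re (qtrace X (mmul X (ext_op W X Q) (ext_so V E \<rho>))))"

definition sat_par :: "nat set \<Rightarrow> nat set \<Rightarrow> superop \<Rightarrow> qop \<Rightarrow> qop \<Rightarrow> bool" where
  "sat_par V W E P Q \<longleftrightarrow> (\<forall>X \<rho>. finite X \<longrightarrow> V \<union> W \<subseteq> X \<longrightarrow> density X \<rho> \<longrightarrow>
     Re (qtrace X (mmul X (ext_op W X P) \<rho>))
       \<le> Re (qtrace X (mmul X (ext_op W X Q) (ext_so V E \<rho>)))
          + Re (qtrace X \<rho>) - Re (qtrace X (ext_so V E \<rho>)))"

definition le_T :: "nat set \<Rightarrow> superop \<Rightarrow> superop \<Rightarrow> bool" where
  "le_T V E F \<longleftrightarrow> (\<forall>W P Q. finite W \<longrightarrow> projector W P \<longrightarrow> projector W Q \<longrightarrow>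
      sat_tot V W E P Q \<longrightarrow> sat_tot V W F P Q)"

definition le_P :: "nat set \<Rightarrow> superop \<Rightarrow> superop \<Rightarrow> bool" where
  "le_P V E F \<longleftrightarrow> (\<forall>W P Q. finite W \<longrightarrow> projector W P \<longrightarrow> projector W Q \<longrightarrow>
      sat_par V W E P Q \<longrightarrow> sat_par V W F P Q)"

end

theory Submission
  imports Defs "HOL-Library.Function_Algebras" "HOL-Library.FuncSet"
begin

lemma finite_asg: "finite X \<Longrightarrow> finite (asg X)"
proof -
  assume "finite X"
  have "asg X \<subseteq> (\<lambda>S q. q \<in> S) ` Pow X"
  proof
    fix f assume "f \<in> asg X"
    hence "f = (\<lambda>q. q \<in> {q. f q})" "{q. f q} \<in> Pow X" by (auto simp: asg_def)
    thus "f \<in> (\<lambda>S q. q \<in> S) ` Pow X" by blast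
  qed
  thus ?thesis using \<open>finite X\<close> by (meson finite_Pow_iff finite_imageI finite_subset)
qed

definition cl :: "nat set \<Rightarrow> qop \<Rightarrow> bool" where
  "cl X A \<longleftrightarrow> (\<forall>s t. s \<notin> asg X \<or> t \<notin> asg X \<longrightarrow> A s t = 0)"

definition Idm :: "nat set \<Rightarrow> qop" where
  "Idm X = clip X (\<lambda>s t. if s = t then 1 else 0)"

lemma sum_list_apply_fun: "sum_list (map f xs) s = sum_list (map (\<lambda>x. f x s) xs)"
  by (induction xs) auto

lemma sum_apply_fun: "sum f S s = sum (\<lambda>x. f x s) S"
  by (induction S rule: infinite_finite_induct) auto

lemma cl_clip[simp]: "cl X (clip X A)"
  by (auto simp: cl_def clip_def)

lemma clip_cl: "cl X A \<Longrightarrow> clip X A = A"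
  by (auto simp: cl_def clip_def fun_eq_iff)

lemma cl_Idm[simp]: "cl X (Idm X)" by (simp add: Idm_def)

lemma cl_mmul[simp]: "cl X A \<Longrightarrow> cl X B \<Longrightarrow> cl X (mmul X A B)"
  by (auto simp: cl_def mmul_def)


lemma cl_adj[simp]: "cl X A \<Longrightarrow> cl X (adj A)"
  by (auto simp: cl_def adj_def)

lemma cl_diff[simp]: "cl X A \<Longrightarrow> cl X B \<Longrightarrow> cl X (A - B)"
  by (auto simp: cl_def)

lemma cl_add[simp]: "cl X A \<Longrightarrow> cl X B \<Longrightarrow> cl X (A + B)"
  by (auto simp: cl_def)

lemma cl_zero[simp]: "cl X 0"
  by (auto simp: cl_def)

lemma cl_sum_list[simp]: "(\<And>x. x \<in> set xs \<Longrightarrow> cl X (f x)) \<Longrightarrow> cl X (sum_list (map f xs))"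
  by (induction xs) auto

lemma mmul_clip_left: "mmul X (clip X A) B s t = (if s \<in> asg X then mmul X A B s t else 0)"
  by (auto simp: mmul_def clip_def intro!: sum.cong)

lemma mmul_clip_right: "mmul X A (clip X B) s t = (if t \<in> asg X then mmul X A B s t else 0)"
  by (auto simp: mmul_def clip_def intro!: sum.cong)

lemma clip_mmul: "clip X (mmul X A B) = mmul X (clip X A) (clip X B)"
proof (rule ext, rule ext)
  fix s t
  show "clip X (mmul X A B) s t = mmul X (clip X A) (clip X B) s t"
    apply (subst mmul_clip_left) apply (subst mmul_clip_right)
    by (simp add: clip_def)
qed

lemma mmul_assoc: "mmul X (mmul X A B) C = mmul X A (mmul X B C)"
proof (rule ext, rule ext)
  fix s t
  have "mmul X (mmul X A B) C s t = (\<Sum>u\<in>asg X. \<Sum>w\<in>asg X. A s w * B w u * C u t)"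
    by (simp add: mmul_def sum_distrib_right)
  also have "\<dots> = (\<Sum>w\<in>asg X. \<Sum>u\<in>asg X. A s w * B w u * C u t)"
    by (rule sum.swap)
  also have "\<dots> = mmul X A (mmul X B C) s t"
    by (simp add: mmul_def sum_distrib_left mult.assoc)
  finally show "mmul X (mmul X A B) C s t = mmul X A (mmul X B C) s t" .
qed

lemma adj_mmul: "adj (mmul X A B) = mmul X (adj B) (adj A)"
  by (simp add: fun_eq_iff mmul_def adj_def mult.commute)

lemma adj_adj[simp]: "adj (adj A) = A"
  by (simp add: adj_def)

lemma qtrace_comm: "qtrace X (mmul X A B) = qtrace X (mmul X B A)"
proof -
  have "qtrace X (mmul X A B) = (\<Sum>s\<in>asg X. \<Sum>u\<in>asg X. A s u * B u s)"
    by (simp add: qtrace_def mmul_def)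
  also have "\<dots> = (\<Sum>u\<in>asg X. \<Sum>s\<in>asg X. A s u * B u s)"
    by (rule sum.swap)
  also have "\<dots> = qtrace X (mmul X B A)"
    by (simp add: qtrace_def mmul_def mult.commute)
  finally show ?thesis .
qed

lemma mmul_Idm_left: "finite X \<Longrightarrow> cl X A \<Longrightarrow> mmul X (Idm X) A = A"
proof -
  assume fX: "finite X" and a: "cl X A"
  show ?thesis
  proof (rule ext, rule ext)
    fix s t
    show "mmul X (Idm X) A s t = A s t"
    proof (cases "s \<in> asg X")
      case True
      have "mmul X (Idm X) A s t = (\<Sum>u\<in>asg X. (if u = s then A s t else 0))"
        unfolding mmul_def Idm_def clip_def using True by (intro sum.cong) auto
      also have "\<dots> = A s t" using True fX by (simp add: sum.delta' finite_asg)
      finally show ?thesis .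
    next
      case False thus ?thesis using a by (simp add: mmul_def Idm_def clip_def cl_def)
    qed
  qed
qed

lemma mmul_Idm_right: "finite X \<Longrightarrow> cl X A \<Longrightarrow> mmul X A (Idm X) = A"
proof -
  assume fX: "finite X" and a: "cl X A"
  show ?thesis
  proof (rule ext, rule ext)
    fix s t
    show "mmul X A (Idm X) s t = A s t"
    proof (cases "t \<in> asg X")
      case True
      have "mmul X A (Idm X) s t = (\<Sum>u\<in>asg X. (if u = t then A s t else 0))"
        unfolding mmul_def Idm_def clip_def using True by (intro sum.cong) auto
      also have "\<dots> = A s t" using True fX by (simp add: sum.delta' finite_asg)
      finally show ?thesis .
    next
      case False thus ?thesis using a by (simp add: mmul_def Idm_def clip_def cl_def)
    qed
  qed
qed

lemma adj_Idm[simp]: "adj (Idm X) = Idm X"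
  by (auto simp: adj_def Idm_def clip_def fun_eq_iff)

lemma mmul_diff_left: "mmul X (A - B) C = mmul X A C - mmul X B C"
  by (simp add: fun_eq_iff mmul_def algebra_simps sum_subtractf)
lemma mmul_diff_right: "mmul X A (B - C) = mmul X A B - mmul X A C"
  by (simp add: fun_eq_iff mmul_def algebra_simps sum_subtractf)
lemma mmul_add_left: "mmul X (A + B) C = mmul X A C + mmul X B C"
  by (simp add: fun_eq_iff mmul_def algebra_simps sum.distrib)
lemma mmul_add_right: "mmul X A (B + C) = mmul X A B + mmul X A C"
  by (simp add: fun_eq_iff mmul_def algebra_simps sum.distrib)
lemma mmul_zero_left[simp]: "mmul X 0 C = 0"
  by (simp add: fun_eq_iff mmul_def)
lemma mmul_zero_right[simp]: "mmul X C 0 = 0"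
  by (simp add: fun_eq_iff mmul_def)
lemma adj_diff: "adj (A - B) = adj A - adj B"
  by (simp add: fun_eq_iff adj_def)
lemma adj_add: "adj (A + B) = adj A + adj B"
  by (simp add: fun_eq_iff adj_def)
lemma adj_zero[simp]: "adj 0 = 0"
  by (simp add: fun_eq_iff adj_def)

lemma sum_sum_list_swap: "(\<Sum>u\<in>S. \<Sum>x\<leftarrow>xs. f x u) = (\<Sum>x\<leftarrow>xs. \<Sum>u\<in>S. f x u)"
  by (induction xs) (simp_all add: sum.distrib)

lemma mmul_sum_list_left: "mmul X (sum_list (map f xs)) C = sum_list (map (\<lambda>x. mmul X (f x) C) xs)"
  by (simp add: fun_eq_iff mmul_def sum_list_apply_fun sum_list_mult_const[symmetric] sum_sum_list_swap)
lemma mmul_sum_list_right: "mmul X C (sum_list (map f xs)) = sum_list (map (\<lambda>x. mmul X C (f x)) xs)"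
  by (simp add: fun_eq_iff mmul_def sum_list_apply_fun sum_list_const_mult[symmetric] sum_sum_list_swap)

lemma qtrace_add: "qtrace X (A + B) = qtrace X A + qtrace X B"
  by (simp add: qtrace_def sum.distrib)
lemma qtrace_diff: "qtrace X (A - B) = qtrace X A - qtrace X B"
  by (simp add: qtrace_def sum_subtractf)
lemma qtrace_zero[simp]: "qtrace X 0 = 0"
  by (simp add: qtrace_def)
lemma qtrace_sum_list: "qtrace X (sum_list (map f xs)) = sum_list (map (\<lambda>x. qtrace X (f x)) xs)"
  by (induction xs) (auto simp: qtrace_def sum.distrib)

lemma qtrace_clip: "qtrace X (clip X A) = qtrace X A"
  by (simp add: qtrace_def clip_def)

definition pj :: "nat set \<Rightarrow> qop \<Rightarrow> bool" where
  "pj X P \<longleftrightarrow> cl X P \<and> mmul X P P = P \<and> adj P = P"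

lemma projector_pj: "projector X P \<Longrightarrow> pj X (clip X P)"
proof -
  assume p: "projector X P"
  have "mmul X (clip X P) (clip X P) = clip X (mmul X P P)" by (simp add: clip_mmul)
  also have "\<dots> = clip X P" using p by (auto simp: clip_def projector_def fun_eq_iff)
  moreover have "adj (clip X P) = clip X P" using p
    by (auto simp: clip_def projector_def fun_eq_iff adj_def)
  ultimately show ?thesis by (simp add: pj_def)
qed

lemma pj_compl: "finite X \<Longrightarrow> pj X P \<Longrightarrow> pj X (Idm X - P)"
  unfolding pj_def
  by (auto simp: mmul_diff_left mmul_diff_right mmul_Idm_left mmul_Idm_right adj_diff)

lemma pj_Idm: "finite X \<Longrightarrow> pj X (Idm X)"
  by (simp add: pj_def mmul_Idm_left)


definition ip :: "nat set \<Rightarrow> qvec \<Rightarrow> qvec \<Rightarrow> complex" where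
  "ip X x y = (\<Sum>s\<in>asg X. cnj (x s) * y s)"

lemma ip_adj: "ip X x (apply_op X A y) = ip X (apply_op X (adj A) x) y"
proof -
  have "ip X x (apply_op X A y) = (\<Sum>s\<in>asg X. \<Sum>t\<in>asg X. cnj (x s) * A s t * y t)"
    by (simp add: ip_def apply_op_def sum_distrib_left mult.assoc)
  also have "\<dots> = (\<Sum>t\<in>asg X. \<Sum>s\<in>asg X. cnj (x s) * A s t * y t)" by (rule sum.swap)
  also have "\<dots> = ip X (apply_op X (adj A) x) y"
    unfolding ip_def apply_op_def adj_def
    by (auto simp: sum_distrib_right sum_distrib_left intro!: sum.cong simp: ac_simps)
  finally show ?thesis .
qed

lemma ip_adj': "ip X x (apply_op X (adj A) y) = ip X (apply_op X A x) y"
  using ip_adj[of X x "adj A" y] by simp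

lemma apply_mmul: "apply_op X (mmul X A B) y = apply_op X A (apply_op X B y)"
proof (rule ext)
  fix s
  have "apply_op X (mmul X A B) y s = (\<Sum>t\<in>asg X. \<Sum>u\<in>asg X. A s u * B u t * y t)"
    by (simp add: mmul_def apply_op_def sum_distrib_right)
  also have "\<dots> = (\<Sum>u\<in>asg X. \<Sum>t\<in>asg X. A s u * B u t * y t)" by (rule sum.swap)
  also have "\<dots> = apply_op X A (apply_op X B y) s"
    by (simp add: apply_op_def sum_distrib_left mult.assoc)
  finally show "apply_op X (mmul X A B) y s = apply_op X A (apply_op X B y) s" .
qed

lemma ip_conj: "cnj (ip X x y) = ip X y x"
  by (simp add: ip_def mult.commute)

lemma cnj_mult_self: "cnj z * z = complex_of_real ((cmod z)\<^sup>2)"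
  by (metis complex_norm_square mult.commute of_real_power)

lemma ip_self: "ip X x x = complex_of_real (\<Sum>s\<in>asg X. (cmod (x s))\<^sup>2)"
  by (simp add: ip_def cnj_mult_self)

lemma ip_self_Re: "Re (ip X x x) = (\<Sum>s\<in>asg X. (cmod (x s))\<^sup>2)"
  by (simp add: ip_self)

lemma ip_self_Im[simp]: "Im (ip X x x) = 0"
  by (simp add: ip_self)

lemma ip_self_nonneg: "0 \<le> Re (ip X x x)"
  by (simp add: ip_self_Re sum_nonneg)

lemma ip_self_zero: "finite X \<Longrightarrow> Re (ip X x x) \<le> 0 \<Longrightarrow> s \<in> asg X \<Longrightarrow> x s = 0"
proof -
  assume f: "finite X" and z: "Re (ip X x x) \<le> 0" and s: "s \<in> asg X"
  have "(\<Sum>s\<in>asg X. (cmod (x s))\<^sup>2) = 0"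
    using z ip_self_nonneg[of X x] by (simp add: ip_self_Re)
  hence "\<forall>s\<in>asg X. (cmod (x s))\<^sup>2 = 0"
    using f by (subst sum_nonneg_eq_0_iff[symmetric]) (auto simp: finite_asg)
  thus ?thesis using s by simp
qed

lemma qtrace_outer: "qtrace X (outer x x) = ip X x x"
  by (simp add: qtrace_def outer_def ip_def mult.commute)

lemma qtrace_mmul_outer: "qtrace X (mmul X A (outer x y)) = ip X y (apply_op X A x)"
  by (simp add: qtrace_def outer_def ip_def mmul_def apply_op_def sum_distrib_right
      sum_distrib_left mult.commute mult.left_commute)

lemma kraus_outer: "mmul X (mmul X K (outer x x)) (adj K) = outer (apply_op X K x) (apply_op X K x)"
  by (simp add: fun_eq_iff mmul_def outer_def adj_def apply_op_def sum_distrib_right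
      sum_distrib_left mult.commute mult.left_commute)

lemma qf_ip: "(\<Sum>s\<in>asg X. \<Sum>t\<in>asg X. cnj (\<psi> s) * A s t * \<psi> t) = ip X \<psi> (apply_op X A \<psi>)"
  by (simp add: ip_def apply_op_def sum_distrib_left mult.assoc)

lemma positive_ip: "positive X A \<longleftrightarrow> (\<forall>\<psi>. Im (ip X \<psi> (apply_op X A \<psi>)) = 0 \<and> 0 \<le> Re (ip X \<psi> (apply_op X A \<psi>)))"
  by (simp add: positive_def qf_ip Let_def)

lemma ip_outer_apply: "ip X \<psi> (apply_op X (outer x x) \<psi>) = ip X \<psi> x * cnj (ip X \<psi> x)"
  by (simp add: ip_def apply_op_def outer_def sum_distrib_left sum_distrib_right
      mult.commute mult.left_commute)

lemma positive_outer: "positive X (outer x x)"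
  unfolding positive_ip ip_outer_apply
  by (simp add: complex_norm_square[symmetric])

lemma positive_conj: "positive X \<rho> \<Longrightarrow> positive X (mmul X (mmul X (adj B) \<rho>) B)"
  unfolding positive_ip
  by (simp add: apply_mmul ip_adj')

lemma trace_conj_eq: "qtrace X (mmul X (mmul X B \<rho>) (adj B)) =
   (\<Sum>s\<in>asg X. ip X (\<lambda>u. cnj (B s u)) (apply_op X \<rho> (\<lambda>u. cnj (B s u))))"
proof -
  have "qtrace X (mmul X (mmul X B \<rho>) (adj B)) = (\<Sum>s\<in>asg X. \<Sum>w\<in>asg X. \<Sum>u\<in>asg X. B s u * \<rho> u w * cnj (B s w))"
    by (simp add: qtrace_def mmul_def adj_def sum_distrib_right)
  also have "\<dots> = (\<Sum>s\<in>asg X. \<Sum>u\<in>asg X. \<Sum>w\<in>asg X. B s u * \<rho> u w * cnj (B s w))"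
    by (rule sum.cong[OF refl], rule sum.swap)
  also have "\<dots> = (\<Sum>s\<in>asg X. ip X (\<lambda>u. cnj (B s u)) (apply_op X \<rho> (\<lambda>u. cnj (B s u))))"
    by (simp add: ip_def apply_op_def sum_distrib_left mult.assoc)
  finally show ?thesis .
qed

lemma trace_conj_pos: "positive X \<rho> \<Longrightarrow> 0 \<le> Re (qtrace X (mmul X (mmul X B \<rho>) (adj B)))"
  unfolding trace_conj_eq positive_ip
  by (simp add: sum_nonneg)

lemma ip_add_right: "ip X x (y + z) = ip X x y + ip X x z"
  by (simp add: ip_def sum.distrib algebra_simps)
lemma ip_add_left: "ip X (y + z) x = ip X y x + ip X z x"
  by (simp add: ip_def sum.distrib algebra_simps)
lemma ip_scale_right: "ip X x (\<lambda>s. c * y s) = c * ip X x y"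
  by (simp add: ip_def sum_distrib_left algebra_simps)
lemma ip_scale_left: "ip X (\<lambda>s. c * y s) x = cnj c * ip X y x"
  by (simp add: ip_def sum_distrib_left algebra_simps)
lemma apply_add: "apply_op X A (x + y) = apply_op X A x + apply_op X A y"
  by (simp add: fun_eq_iff apply_op_def sum.distrib algebra_simps)
lemma apply_scale: "apply_op X A (\<lambda>s. c * y s) = (\<lambda>s. c * apply_op X A y s)"
  by (simp add: fun_eq_iff apply_op_def sum_distrib_left algebra_simps)

lemma psd_kernel:
  assumes f: "finite X" and h: "adj H = H"
    and psd: "\<And>\<phi>. 0 \<le> Re (ip X \<phi> (apply_op X H \<phi>))"
    and z: "Re (ip X \<psi> (apply_op X H \<psi>)) \<le> 0"
    and s: "s \<in> asg X"
  shows "apply_op X H \<psi> s = 0"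
proof -
  define y where "y = apply_op X H \<psi>"
  define n where "n = Re (ip X y y)"
  define c where "c = Re (ip X y (apply_op X H y))"
  have c0: "0 \<le> c" using psd by (simp add: c_def)
  have n0: "0 \<le> n" by (simp add: n_def ip_self_nonneg)
  have ipyy: "ip X y y = complex_of_real n" using ip_self[of X y] by (simp add: n_def ip_self_Re)
  have e1: "ip X \<psi> (apply_op X H y) = complex_of_real n"
  proof -
    have "ip X \<psi> (apply_op X H y) = ip X y y" using ip_adj[of X \<psi> H y] h by (simp add: y_def)
    thus ?thesis using ipyy by simp
  qed
  have e2: "ip X y (apply_op X H \<psi>) = complex_of_real n" using ipyy by (simp add: y_def)
  define t :: real where "t = - n / (c + 1)"
  have "0 \<le> Re (ip X (\<psi> + (\<lambda>s. complex_of_real t * y s)) (apply_op X H (\<psi> + (\<lambda>s. complex_of_real t * y s))))"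
    by (rule psd)
  also have "Re (ip X (\<psi> + (\<lambda>s. complex_of_real t * y s)) (apply_op X H (\<psi> + (\<lambda>s. complex_of_real t * y s))))
     = Re (ip X \<psi> (apply_op X H \<psi>)) + 2 * t * n + t * t * c"
    by (simp add: apply_add apply_scale ip_add_left ip_add_right ip_scale_left ip_scale_right e1
        e2 c_def y_def[symmetric] n_def algebra_simps)
  finally have "0 \<le> 2 * t * n + t * t * c" using z by (simp add: y_def)
  hence "0 \<le> n * n * (- c - 2)"
  proof -
    assume a: "0 \<le> 2 * t * n + t * t * c"
    have tc: "t * (c+1) = - n" using c0 by (simp add: t_def)
    have "(2 * t * n + t * t * c) * ((c+1) * (c+1)) = 2*n*(t*(c+1))*(c+1) + (t*(c+1))*(t*(c+1))*c"
      by (simp add: algebra_simps)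
    also have "\<dots> = n * n * (- c - 2)" unfolding tc by (simp add: algebra_simps)
    finally have "(2 * t * n + t * t * c) * ((c+1) * (c+1)) = n * n * (- c - 2)" .
    moreover have "0 \<le> (2 * t * n + t * t * c) * ((c+1) * (c+1))" using a c0 by simp
    ultimately show ?thesis by simp
  qed
  hence "n * n * (c + 2) \<le> 0" by (simp add: algebra_simps)
  moreover have "0 < c + 2" using c0 by simp
  ultimately have "n * n \<le> 0" by (simp add: mult_le_0_iff)
  hence "n = 0" by (auto simp: mult_le_0_iff)
  hence "Re (ip X y y) \<le> 0" by (simp add: n_def)
  thus ?thesis using ip_self_zero[OF f] s by (simp add: y_def)
qed


definition kraus_cl :: "nat set \<Rightarrow> superop \<Rightarrow> qop list \<Rightarrow> bool" where
  "kraus_cl X G Ks \<longleftrightarrow> (\<forall>K\<in>set Ks. cl X K) \<and>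
     (\<forall>A. clip X (G A) = sum_list (map (\<lambda>K. mmul X (mmul X K A) (adj K)) Ks))"

definition tn :: "nat set \<Rightarrow> superop \<Rightarrow> bool" where
  "tn X G \<longleftrightarrow> (\<forall>\<rho>. positive X \<rho> \<longrightarrow> Re (qtrace X (G \<rho>)) \<le> Re (qtrace X \<rho>))"

definition kmat :: "nat set \<Rightarrow> qop list \<Rightarrow> qop" where
  "kmat X Ks = sum_list (map (\<lambda>K. mmul X (adj K) K) Ks)"

lemma Re_sum_list: "Re (sum_list (map f xs)) = sum_list (map (\<lambda>x. Re (f x)) xs)"
  by (induction xs) auto

lemma sum_list_nonneg_le0:
  fixes f :: "'a \<Rightarrow> real"
  assumes "\<And>x. x \<in> set xs \<Longrightarrow> 0 \<le> f x" "sum_list (map f xs) \<le> 0" "x \<in> set xs"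
  shows "f x \<le> 0"
  using assms
proof (induction xs)
  case Nil thus ?case by simp
next
  case (Cons a xs)
  have "0 \<le> sum_list (map f xs)" using Cons.prems(1) by (intro sum_list_nonneg) auto
  moreover have "0 \<le> f a" using Cons.prems(1) by simp
  moreover have "f a + sum_list (map f xs) \<le> 0" using Cons.prems(2) by simp
  ultimately have "f a \<le> 0" "sum_list (map f xs) \<le> 0" by linarith+
  thus ?case using Cons by auto
qed

lemma qtrace_mmul_clip_right: "qtrace X (mmul X B (clip X Y)) = qtrace X (mmul X B Y)"
  by (simp add: qtrace_def mmul_clip_right)

lemma qtrace_mmul_clip_left: "qtrace X (mmul X (clip X B) Y) = qtrace X (mmul X B Y)"
  by (simp add: qtrace_def mmul_clip_left)

lemma qtrace_Idm: "finite X \<Longrightarrow> qtrace X (mmul X (Idm X) Y) = qtrace X Y"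
proof -
  assume f: "finite X"
  have "mmul X (Idm X) Y s s = Y s s" if "s \<in> asg X" for s
  proof -
    have "mmul X (Idm X) Y s s = (\<Sum>u\<in>asg X. (if u = s then Y s s else 0))"
      unfolding mmul_def Idm_def clip_def using that by (intro sum.cong) auto
    also have "\<dots> = Y s s" using that f by (simp add: sum.delta' finite_asg)
    finally show ?thesis .
  qed
  thus ?thesis by (simp add: qtrace_def)
qed

lemma apply_Idm: "finite X \<Longrightarrow> s \<in> asg X \<Longrightarrow> apply_op X (Idm X) y s = y s"
proof -
  assume f: "finite X" and s: "s \<in> asg X"
  have "apply_op X (Idm X) y s = (\<Sum>u\<in>asg X. (if u = s then y s else 0))"
    unfolding apply_op_def Idm_def clip_def using s by (intro sum.cong) auto
  also have "\<dots> = y s" using s f by (simp add: sum.delta' finite_asg)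
  finally show ?thesis .
qed

lemma ip_apply_Idm_right: "finite X \<Longrightarrow> ip X x (apply_op X (Idm X) y) = ip X x y"
  by (simp add: ip_def apply_Idm)

lemma apply_diff: "apply_op X (A - B) y = apply_op X A y - apply_op X B y"
  by (simp add: fun_eq_iff apply_op_def sum_subtractf algebra_simps)

lemma ip_diff_right: "ip X x (y - z) = ip X x y - ip X x z"
  by (simp add: ip_def sum_subtractf algebra_simps)

lemma apply_sum_list: "apply_op X (sum_list (map f xs)) y = sum_list (map (\<lambda>x. apply_op X (f x) y) xs)"
  by (simp add: fun_eq_iff apply_op_def sum_list_apply_fun sum_list_mult_const[symmetric] sum_sum_list_swap)

lemma ip_sum_list_right: "ip X x (sum_list (map f xs)) = sum_list (map (\<lambda>z. ip X x (f z)) xs)"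
  by (simp add: ip_def sum_list_apply_fun sum_list_const_mult[symmetric] sum_sum_list_swap)

lemma adj_sum_list: "adj (sum_list (map f xs)) = sum_list (map (\<lambda>x. adj (f x)) xs)"
  by (simp add: fun_eq_iff adj_def sum_list_apply_fun) (induction xs, auto)

lemma pj_apply_idem: "pj X B \<Longrightarrow> apply_op X B (apply_op X B y) = apply_op X B y"
  by (metis apply_mmul pj_def)

lemma trace_pj_outer: "pj X B \<Longrightarrow> qtrace X (mmul X B (outer y y)) = ip X (apply_op X B y) (apply_op X B y)"
proof -
  assume p: "pj X B"
  have "qtrace X (mmul X B (outer y y)) = ip X y (apply_op X B y)" by (rule qtrace_mmul_outer)
  also have "\<dots> = ip X y (apply_op X (adj B) (apply_op X B y))"
    using p by (simp add: pj_def pj_apply_idem)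
  also have "\<dots> = ip X (apply_op X B y) (apply_op X B y)" by (rule ip_adj')
  finally show ?thesis .
qed

lemma kraus_cl_trace: "kraus_cl X G Ks \<Longrightarrow>
   qtrace X (mmul X B (G \<rho>)) = sum_list (map (\<lambda>K. qtrace X (mmul X B (mmul X (mmul X K \<rho>) (adj K)))) Ks)"
proof -
  assume k: "kraus_cl X G Ks"
  have "qtrace X (mmul X B (G \<rho>)) = qtrace X (mmul X B (clip X (G \<rho>)))"
    by (simp add: qtrace_mmul_clip_right)
  also have "\<dots> = qtrace X (mmul X B (sum_list (map (\<lambda>K. mmul X (mmul X K \<rho>) (adj K)) Ks)))"
    using k by (simp add: kraus_cl_def)
  also have "\<dots> = sum_list (map (\<lambda>K. qtrace X (mmul X B (mmul X (mmul X K \<rho>) (adj K)))) Ks)"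
    by (simp add: mmul_sum_list_right qtrace_sum_list o_def)
  finally show ?thesis .
qed

lemma kraus_cl_trace0: "kraus_cl X G Ks \<Longrightarrow>
   qtrace X (G \<rho>) = sum_list (map (\<lambda>K. qtrace X (mmul X (mmul X K \<rho>) (adj K))) Ks)"
proof -
  assume k: "kraus_cl X G Ks"
  have "qtrace X (G \<rho>) = qtrace X (clip X (G \<rho>))" by (simp add: qtrace_clip)
  also have "\<dots> = qtrace X (sum_list (map (\<lambda>K. mmul X (mmul X K \<rho>) (adj K)) Ks))"
    using k by (simp add: kraus_cl_def)
  also have "\<dots> = sum_list (map (\<lambda>K. qtrace X (mmul X (mmul X K \<rho>) (adj K))) Ks)"
    by (simp add: qtrace_sum_list o_def)
  finally show ?thesis .
qed

lemma pure_trace_G: "kraus_cl X G Ks \<Longrightarrow>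
  qtrace X (G (outer \<phi> \<phi>)) = sum_list (map (\<lambda>K. ip X (apply_op X K \<phi>) (apply_op X K \<phi>)) Ks)"
  by (simp add: kraus_cl_trace0 kraus_outer qtrace_outer)

lemma pure_trace_BG: "kraus_cl X G Ks \<Longrightarrow> pj X B \<Longrightarrow>
  qtrace X (mmul X B (G (outer \<phi> \<phi>))) = sum_list (map (\<lambda>K. ip X (apply_op X B (apply_op X K \<phi>)) (apply_op X B (apply_op X K \<phi>))) Ks)"
  by (simp add: kraus_cl_trace kraus_outer trace_pj_outer)

lemma pyth: "finite X \<Longrightarrow> pj X B \<Longrightarrow>
  ip X y y = ip X (apply_op X B y) (apply_op X B y) + ip X (apply_op X (Idm X - B) y) (apply_op X (Idm X - B) y)"
proof -
  assume f: "finite X" and p: "pj X B"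
  have "ip X y y = qtrace X (mmul X (Idm X) (outer y y))" by (simp add: qtrace_Idm f qtrace_outer)
  also have "\<dots> = qtrace X (mmul X B (outer y y)) + qtrace X (mmul X (Idm X - B) (outer y y))"
    by (simp add: mmul_diff_left qtrace_diff)
  also have "\<dots> = ip X (apply_op X B y) (apply_op X B y) + ip X (apply_op X (Idm X - B) y) (apply_op X (Idm X - B) y)"
    using p f pj_compl by (simp add: trace_pj_outer)
  finally show ?thesis .
qed

lemma density_outer: "Re (ip X \<phi> \<phi>) \<le> 1 \<Longrightarrow> density X (outer \<phi> \<phi>)"
  by (simp add: density_def positive_outer qtrace_outer)

lemma scale_small: "\<exists>c::real. c > 0 \<and> Re (ip X (\<lambda>s. complex_of_real c * \<psi> s) (\<lambda>s. complex_of_real c * \<psi> s)) \<le> 1"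
proof -
  define n where "n = Re (ip X \<psi> \<psi>)"
  have n0: "0 \<le> n" by (simp add: n_def ip_self_nonneg)
  define c where "c = 1 / (1 + n)"
  have "Re (ip X (\<lambda>s. complex_of_real c * \<psi> s) (\<lambda>s. complex_of_real c * \<psi> s)) = c * c * n"
    by (simp add: ip_scale_left ip_scale_right n_def)
  also have "\<dots> \<le> 1"
  proof -
    have "n \<le> (1 + n) * (1 + n)" using n0 by (simp add: algebra_simps)
    hence "n / ((1 + n) * (1 + n)) \<le> 1" using n0 by (simp add: divide_le_eq)
    thus ?thesis by (simp add: c_def)
  qed
  finally show ?thesis using n0 by (intro exI[of _ c]) (simp add: c_def)
qed


lemma sum_list_addf': "sum_list (map (\<lambda>x. f x + g x) xs) = sum_list (map f xs) + (sum_list (map g xs) :: 'b::comm_monoid_add)"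
  by (induction xs) (auto simp: ac_simps)

lemma pure_facts:
  assumes f: "finite X" and k: "kraus_cl X G Ks" and pA: "pj X A" and pB: "pj X B"
    and phi: "apply_op X A \<phi> = \<phi>"
  shows "Re (qtrace X (mmul X A (outer \<phi> \<phi>))) = Re (ip X \<phi> \<phi>)"
    and "Re (qtrace X (outer \<phi> \<phi>)) = Re (ip X \<phi> \<phi>)"
    and "Re (qtrace X (G (outer \<phi> \<phi>))) = Re (qtrace X (mmul X B (G (outer \<phi> \<phi>))))
          + sum_list (map (\<lambda>K. Re (ip X (apply_op X (Idm X - B) (apply_op X K \<phi>)) (apply_op X (Idm X - B) (apply_op X K \<phi>)))) Ks)"
    and "Re (qtrace X (G (outer \<phi> \<phi>))) = sum_list (map (\<lambda>K. Re (ip X (apply_op X K \<phi>) (apply_op X K \<phi>))) Ks)"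
proof -
  show "Re (qtrace X (mmul X A (outer \<phi> \<phi>))) = Re (ip X \<phi> \<phi>)"
    by (simp add: qtrace_mmul_outer phi)
  show "Re (qtrace X (outer \<phi> \<phi>)) = Re (ip X \<phi> \<phi>)" by (simp add: qtrace_outer)
  show g: "Re (qtrace X (G (outer \<phi> \<phi>))) = sum_list (map (\<lambda>K. Re (ip X (apply_op X K \<phi>) (apply_op X K \<phi>))) Ks)"
    by (simp add: pure_trace_G[OF k] Re_sum_list)
  show "Re (qtrace X (G (outer \<phi> \<phi>))) = Re (qtrace X (mmul X B (G (outer \<phi> \<phi>))))
          + sum_list (map (\<lambda>K. Re (ip X (apply_op X (Idm X - B) (apply_op X K \<phi>)) (apply_op X (Idm X - B) (apply_op X K \<phi>)))) Ks)"
    unfolding g pure_trace_BG[OF k pB] Re_sum_list sum_list_addf'[symmetric]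
  proof (rule arg_cong[where f = sum_list], rule map_cong[OF refl])
    fix K
    show "Re (ip X (apply_op X K \<phi>) (apply_op X K \<phi>)) =
      Re (ip X (apply_op X B (apply_op X K \<phi>)) (apply_op X B (apply_op X K \<phi>))) +
      Re (ip X (apply_op X (Idm X - B) (apply_op X K \<phi>)) (apply_op X (Idm X - B) (apply_op X K \<phi>)))"
      using pyth[OF f pB, of "apply_op X K \<phi>"] by (simp only: plus_complex.sel)
  qed
qed

lemma apply_scale_real: "apply_op X N (\<lambda>s. complex_of_real c * \<psi> s) s = complex_of_real c * apply_op X N \<psi> s"
  by (simp add: apply_scale)

lemma par_nec_vec:
  assumes f: "finite X" and k: "kraus_cl X G Ks" and pA: "pj X A" and pB: "pj X B"
    and H: "\<forall>\<rho>. density X \<rho> \<longrightarrow> Re (qtrace X (mmul X A \<rho>))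
              \<le> Re (qtrace X (mmul X B (G \<rho>))) + Re (qtrace X \<rho>) - Re (qtrace X (G \<rho>))"
    and psi: "apply_op X A \<psi> = \<psi>" and K: "K \<in> set Ks" and s: "s \<in> asg X"
  shows "apply_op X (Idm X - B) (apply_op X K \<psi>) s = 0"
proof -
  obtain c :: real where c: "c > 0" and cs: "Re (ip X (\<lambda>s. complex_of_real c * \<psi> s) (\<lambda>s. complex_of_real c * \<psi> s)) \<le> 1"
    using scale_small by blast
  define \<phi> where "\<phi> = (\<lambda>s. complex_of_real c * \<psi> s)"
  have phi: "apply_op X A \<phi> = \<phi>" unfolding \<phi>_def apply_scale using psi by simp
  have d: "density X (outer \<phi> \<phi>)" using cs by (simp add: \<phi>_def density_outer)
  note pf = pure_facts[OF f k pA pB phi]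
  define g where "g = (\<lambda>K. Re (ip X (apply_op X (Idm X - B) (apply_op X K \<phi>)) (apply_op X (Idm X - B) (apply_op X K \<phi>))))"
  have "Re (qtrace X (mmul X A (outer \<phi> \<phi>)))
              \<le> Re (qtrace X (mmul X B (G (outer \<phi> \<phi>)))) + Re (qtrace X (outer \<phi> \<phi>)) - Re (qtrace X (G (outer \<phi> \<phi>)))"
    using H d by blast
  hence "sum_list (map g Ks) \<le> 0" using pf(1,2,3) unfolding g_def by linarith
  hence "g K \<le> 0" using K by (rule sum_list_nonneg_le0[rotated]) (simp add: g_def ip_self_nonneg)
  hence "apply_op X (Idm X - B) (apply_op X K \<phi>) s = 0"
    using ip_self_zero[OF f _ s] by (simp add: g_def)
  hence "complex_of_real c * apply_op X (Idm X - B) (apply_op X K \<psi>) s = 0"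
    by (simp add: \<phi>_def apply_scale)
  thus ?thesis using c by simp
qed

lemma tot_nec_vec:
  assumes f: "finite X" and k: "kraus_cl X G Ks" and t: "tn X G" and pA: "pj X A" and pB: "pj X B"
    and H: "\<forall>\<rho>. density X \<rho> \<longrightarrow> Re (qtrace X (mmul X A \<rho>)) \<le> Re (qtrace X (mmul X B (G \<rho>)))"
    and psi: "apply_op X A \<psi> = \<psi>" and s: "s \<in> asg X"
  shows "\<forall>K\<in>set Ks. apply_op X (Idm X - B) (apply_op X K \<psi>) s = 0"
    and "apply_op X (Idm X - kmat X Ks) \<psi> s = 0"
proof -
  obtain c :: real where c: "c > 0" and cs: "Re (ip X (\<lambda>s. complex_of_real c * \<psi> s) (\<lambda>s. complex_of_real c * \<psi> s)) \<le> 1"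
    using scale_small by blast
  define \<phi> where "\<phi> = (\<lambda>s. complex_of_real c * \<psi> s)"
  have phi: "apply_op X A \<phi> = \<phi>" unfolding \<phi>_def apply_scale using psi by simp
  have d: "density X (outer \<phi> \<phi>)" using cs by (simp add: \<phi>_def density_outer)
  note pf = pure_facts[OF f k pA pB phi]
  define g where "g = (\<lambda>K. Re (ip X (apply_op X (Idm X - B) (apply_op X K \<phi>)) (apply_op X (Idm X - B) (apply_op X K \<phi>))))"
  have tnp: "Re (qtrace X (G (outer \<phi> \<phi>))) \<le> Re (qtrace X (outer \<phi> \<phi>))"
    using t positive_outer by (simp add: tn_def)
  have h1: "Re (qtrace X (mmul X A (outer \<phi> \<phi>))) \<le> Re (qtrace X (mmul X B (G (outer \<phi> \<phi>))))"
    using H d by blast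
  have "sum_list (map g Ks) \<le> 0" using h1 tnp pf(1,2,3) unfolding g_def by linarith
  hence gk: "g K \<le> 0" if "K \<in> set Ks" for K
    using that by (rule sum_list_nonneg_le0[rotated]) (simp add: g_def ip_self_nonneg)
  show "\<forall>K\<in>set Ks. apply_op X (Idm X - B) (apply_op X K \<psi>) s = 0"
  proof
    fix K assume K: "K \<in> set Ks"
    hence "apply_op X (Idm X - B) (apply_op X K \<phi>) s = 0"
      using gk ip_self_zero[OF f _ s] by (simp add: g_def)
    hence "complex_of_real c * apply_op X (Idm X - B) (apply_op X K \<psi>) s = 0"
      by (simp add: \<phi>_def apply_scale)
    thus "apply_op X (Idm X - B) (apply_op X K \<psi>) s = 0" using c by simp
  qed
  define D where "D = Idm X - kmat X Ks"
  have qfD: "Re (ip X x (apply_op X D x)) = Re (qtrace X (outer x x)) - Re (qtrace X (G (outer x x)))" for x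
  proof -
    have "ip X x (apply_op X D x) = ip X x x - sum_list (map (\<lambda>K. ip X (apply_op X K x) (apply_op X K x)) Ks)"
      by (simp add: D_def kmat_def apply_diff ip_diff_right ip_apply_Idm_right f apply_sum_list
          ip_sum_list_right apply_mmul ip_adj' o_def)
    thus ?thesis by (simp add: pure_trace_G[OF k] qtrace_outer)
  qed
  have psd: "0 \<le> Re (ip X x (apply_op X D x))" for x
    unfolding qfD using t positive_outer by (simp add: tn_def)
  have adjD: "adj D = D"
    by (simp add: D_def kmat_def adj_diff adj_sum_list adj_mmul o_def)
  have "0 \<le> sum_list (map g Ks)" by (rule sum_list_nonneg) (auto simp: g_def ip_self_nonneg)
  hence "Re (ip X \<phi> (apply_op X D \<phi>)) \<le> 0" unfolding qfD using h1 pf(1,2,3) unfolding g_def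
    by linarith
  hence "apply_op X D \<phi> s = 0" using psd_kernel[OF f adjD psd _ s] by blast
  hence "complex_of_real c * apply_op X D \<psi> s = 0" by (simp add: \<phi>_def apply_scale)
  thus "apply_op X (Idm X - kmat X Ks) \<psi> s = 0" using c by (simp add: D_def)
qed

lemma mat_from_vec:
  assumes f: "finite X" and pA: "pj X A" and N: "cl X N"
    and h: "\<And>\<psi> s. apply_op X A \<psi> = \<psi> \<Longrightarrow> s \<in> asg X \<Longrightarrow> apply_op X N \<psi> s = 0"
  shows "mmul X N A = 0"
proof (rule ext, rule ext)
  fix s t
  show "mmul X N A s t = 0 s t"
  proof (cases "s \<in> asg X \<and> t \<in> asg X")
    case True
    define \<psi> where "\<psi> = (\<lambda>u. A u t)"
    have "apply_op X A \<psi> = (\<lambda>u. mmul X A A u t)" by (simp add: \<psi>_def apply_op_def mmul_def)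
    also have "\<dots> = \<psi>" using pA by (simp add: pj_def \<psi>_def)
    finally have "apply_op X N \<psi> s = 0" using h True by blast
    thus ?thesis by (simp add: \<psi>_def apply_op_def mmul_def)
  next
    case False
    have "cl X (mmul X N A)" using N pA by (simp add: pj_def)
    thus ?thesis using False by (auto simp: cl_def)
  qed
qed

lemma kmat_cl: "kraus_cl X G Ks \<Longrightarrow> cl X (kmat X Ks)"
  by (auto simp: kmat_def kraus_cl_def)

lemma par_nec:
  assumes f: "finite X" and k: "kraus_cl X G Ks" and pA: "pj X A" and pB: "pj X B"
    and H: "\<forall>\<rho>. density X \<rho> \<longrightarrow> Re (qtrace X (mmul X A \<rho>))
              \<le> Re (qtrace X (mmul X B (G \<rho>))) + Re (qtrace X \<rho>) - Re (qtrace X (G \<rho>))"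
    and K: "K \<in> set Ks"
  shows "mmul X (Idm X - B) (mmul X K A) = 0"
proof -
  have clK: "cl X K" using k K by (simp add: kraus_cl_def)
  have "mmul X (mmul X (Idm X - B) K) A = 0"
    by (rule mat_from_vec[OF f pA]) (use clK pB in \<open>simp add: pj_def\<close>,
        simp add: apply_mmul par_nec_vec[OF f k pA pB H _ K])
  thus ?thesis by (simp add: mmul_assoc)
qed

lemma tot_nec:
  assumes f: "finite X" and k: "kraus_cl X G Ks" and t: "tn X G" and pA: "pj X A" and pB: "pj X B"
    and H: "\<forall>\<rho>. density X \<rho> \<longrightarrow> Re (qtrace X (mmul X A \<rho>)) \<le> Re (qtrace X (mmul X B (G \<rho>)))"
  shows "\<forall>K\<in>set Ks. mmul X (Idm X - B) (mmul X K A) = 0"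
    and "mmul X (Idm X - kmat X Ks) A = 0"
proof -
  show "\<forall>K\<in>set Ks. mmul X (Idm X - B) (mmul X K A) = 0"
  proof
    fix K assume K: "K \<in> set Ks"
    have clK: "cl X K" using k K by (simp add: kraus_cl_def)
    have "mmul X (mmul X (Idm X - B) K) A = 0"
      by (rule mat_from_vec[OF f pA]) (use clK pB in \<open>simp add: pj_def\<close>,
          use tot_nec_vec(1)[OF f k t pA pB H] K in \<open>simp add: apply_mmul\<close>)
    thus "mmul X (Idm X - B) (mmul X K A) = 0" by (simp add: mmul_assoc)
  qed
  show "mmul X (Idm X - kmat X Ks) A = 0"
    by (rule mat_from_vec[OF f pA]) (use kmat_cl[OF k] in simp, use tot_nec_vec(2)[OF f k t pA pB H] in simp)
qed


lemma trace_BKsK_pos: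
  assumes pB: "pj X B" and ps: "positive X \<sigma>"
  shows "0 \<le> Re (qtrace X (mmul X B (mmul X (mmul X K \<sigma>) (adj K))))"
proof -
  have "qtrace X (mmul X B (mmul X (mmul X K \<sigma>) (adj K)))
      = qtrace X (mmul X (mmul X B B) (mmul X (mmul X K \<sigma>) (adj K)))"
    using pB by (simp add: pj_def)
  also have "\<dots> = qtrace X (mmul X B (mmul X (mmul X (mmul X K \<sigma>) (adj K)) B))"
    by (simp add: mmul_assoc qtrace_comm[of X B])
  also have "\<dots> = qtrace X (mmul X (mmul X (mmul X B K) \<sigma>) (adj (mmul X B K)))"
    using pB by (simp add: mmul_assoc adj_mmul pj_def)
  finally show ?thesis using trace_conj_pos[OF ps] by simp
qed

lemma par_suff:
  assumes f: "finite X" and k: "kraus_cl X G Ks" and t: "tn X G" and pA: "pj X A" and pB: "pj X B"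
    and c: "\<forall>K\<in>set Ks. mmul X (Idm X - B) (mmul X K A) = 0"
    and pr: "positive X \<rho>"
  shows "Re (qtrace X (mmul X A \<rho>))
              \<le> Re (qtrace X (mmul X B (G \<rho>))) + Re (qtrace X \<rho>) - Re (qtrace X (G \<rho>))"
proof -
  define Bp where "Bp = Idm X - B"
  define Ap where "Ap = Idm X - A"
  have pAp: "pj X Ap" using pj_compl[OF f pA] by (simp add: Ap_def)
  have pBp: "pj X Bp" using pj_compl[OF f pB] by (simp add: Bp_def)
  define \<sigma> where "\<sigma> = mmul X (mmul X Ap \<rho>) Ap"
  have ps: "positive X \<sigma>" using positive_conj[OF pr, of Ap] pAp by (simp add: pj_def \<sigma>_def)
  have key: "qtrace X (mmul X Bp (mmul X (mmul X K \<rho>) (adj K))) = qtrace X (mmul X Bp (mmul X (mmul X K \<sigma>) (adj K)))"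
    if K: "K \<in> set Ks" for K
  proof -
    have clK: "cl X K" using k K by (simp add: kraus_cl_def)
    have h1: "mmul X Bp K = mmul X (mmul X Bp K) Ap"
    proof -
      have "mmul X (mmul X Bp K) Ap = mmul X (mmul X Bp K) (Idm X) - mmul X Bp (mmul X K A)"
        by (simp add: Ap_def mmul_diff_right mmul_assoc)
      also have "\<dots> = mmul X Bp K" using c K clK pBp f by (simp add: Bp_def pj_def mmul_Idm_right)
      finally show ?thesis by simp
    qed
    have z: "qtrace X (mmul X Bp (mmul X (mmul X K R) (adj K))) =
        qtrace X (mmul X (mmul X (mmul X Bp K) R) (adj (mmul X Bp K)))" for R
    proof -
      have "qtrace X (mmul X Bp (mmul X (mmul X K R) (adj K)))
          = qtrace X (mmul X (mmul X Bp Bp) (mmul X (mmul X K R) (adj K)))"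
        using pBp by (simp add: pj_def)
      also have "\<dots> = qtrace X (mmul X Bp (mmul X (mmul X (mmul X K R) (adj K)) Bp))"
        by (simp add: mmul_assoc qtrace_comm[of X Bp])
      also have "\<dots> = qtrace X (mmul X (mmul X (mmul X Bp K) R) (adj (mmul X Bp K)))"
        using pBp by (simp add: mmul_assoc adj_mmul pj_def)
      finally show ?thesis .
    qed
    have "mmul X (mmul X (mmul X Bp K) \<rho>) (adj (mmul X Bp K))
        = mmul X (mmul X (mmul X (mmul X Bp K) Ap) \<rho>) (adj (mmul X (mmul X Bp K) Ap))"
      using h1 by simp
    also have "\<dots> = mmul X (mmul X (mmul X Bp K) \<sigma>) (adj (mmul X Bp K))"
      using pAp by (simp add: \<sigma>_def adj_mmul mmul_assoc pj_def)
    finally show ?thesis using z by simp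
  qed
  have key2: "Re (qtrace X (mmul X Bp (mmul X (mmul X K \<sigma>) (adj K)))) \<le> Re (qtrace X (mmul X (mmul X K \<sigma>) (adj K)))"
    for K
  proof -
    have "qtrace X (mmul X Bp (mmul X (mmul X K \<sigma>) (adj K))) =
       qtrace X (mmul X (mmul X K \<sigma>) (adj K)) - qtrace X (mmul X B (mmul X (mmul X K \<sigma>) (adj K)))"
      by (simp add: Bp_def mmul_diff_left qtrace_diff qtrace_Idm f)
    thus ?thesis using trace_BKsK_pos[OF pB ps, of K] by simp
  qed
  have "Re (qtrace X (mmul X Bp (G \<rho>))) = sum_list (map (\<lambda>K. Re (qtrace X (mmul X Bp (mmul X (mmul X K \<sigma>) (adj K))))) Ks)"
    using key by (simp add: kraus_cl_trace[OF k] Re_sum_list cong: map_cong)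
  also have "\<dots> \<le> sum_list (map (\<lambda>K. Re (qtrace X (mmul X (mmul X K \<sigma>) (adj K)))) Ks)"
    by (rule sum_list_mono) (rule key2)
  also have "\<dots> = Re (qtrace X (G \<sigma>))" by (simp add: kraus_cl_trace0[OF k] Re_sum_list)
  also have "\<dots> \<le> Re (qtrace X \<sigma>)" using t ps by (simp add: tn_def)
  also have "qtrace X \<sigma> = qtrace X (mmul X Ap \<rho>)"
    using pAp by (simp add: \<sigma>_def qtrace_comm[of X "mmul X Ap \<rho>"] mmul_assoc[symmetric] pj_def)
  also have "\<dots> = qtrace X \<rho> - qtrace X (mmul X A \<rho>)"
    by (simp add: Ap_def mmul_diff_left qtrace_diff qtrace_Idm f)
  finally have "Re (qtrace X (mmul X Bp (G \<rho>))) \<le> Re (qtrace X \<rho>) - Re (qtrace X (mmul X A \<rho>))" by simp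
  moreover have "qtrace X (mmul X Bp (G \<rho>)) = qtrace X (G \<rho>) - qtrace X (mmul X B (G \<rho>))"
    by (simp add: Bp_def mmul_diff_left qtrace_diff qtrace_Idm f)
  ultimately show ?thesis by simp
qed

lemma tot_suff:
  assumes f: "finite X" and k: "kraus_cl X G Ks" and pA: "pj X A" and pB: "pj X B"
    and c: "\<forall>K\<in>set Ks. mmul X (Idm X - B) (mmul X K A) = 0"
    and d: "mmul X (Idm X - kmat X Ks) A = 0"
    and pr: "positive X \<rho>"
  shows "Re (qtrace X (mmul X A \<rho>)) \<le> Re (qtrace X (mmul X B (G \<rho>)))"
proof -
  define Ap where "Ap = Idm X - A"
  have pAp: "pj X Ap" using pj_compl[OF f pA] by (simp add: Ap_def)
  define C where "C = sum_list (map (\<lambda>K. mmul X (adj K) (mmul X B K)) Ks)"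
  have clC: "cl X C" using k pB by (auto simp: C_def kraus_cl_def pj_def)
  have clA: "cl X A" using pA by (simp add: pj_def)
  have adjC: "adj C = C" using pB by (simp add: C_def adj_sum_list adj_mmul mmul_assoc pj_def o_def)
  have e1: "qtrace X (mmul X B (G \<rho>)) = qtrace X (mmul X C \<rho>)"
  proof -
    have "qtrace X (mmul X B (mmul X (mmul X K \<rho>) (adj K))) = qtrace X (mmul X (mmul X (adj K) (mmul X B K)) \<rho>)" for K
    proof -
      have "qtrace X (mmul X B (mmul X (mmul X K \<rho>) (adj K))) = qtrace X (mmul X (mmul X B (mmul X K \<rho>)) (adj K))"
        by (simp add: mmul_assoc)
      also have "\<dots> = qtrace X (mmul X (adj K) (mmul X B (mmul X K \<rho>)))" by (rule qtrace_comm)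
      finally show ?thesis by (simp add: mmul_assoc)
    qed
    thus ?thesis by (simp add: kraus_cl_trace[OF k] C_def mmul_sum_list_left qtrace_sum_list o_def)
  qed
  have BKA: "mmul X B (mmul X K A) = mmul X K A" if K: "K \<in> set Ks" for K
  proof -
    have clK: "cl X K" using k K by (simp add: kraus_cl_def)
    have "mmul X (Idm X) (mmul X K A) - mmul X B (mmul X K A) = 0" using c K by (simp add: mmul_diff_left)
    thus ?thesis using clK clA f by (simp add: mmul_Idm_left)
  qed
  have CA: "mmul X C A = A"
  proof -
    have "mmul X C A = sum_list (map (\<lambda>K. mmul X (mmul X (adj K) K) A) Ks)"
      using BKA by (simp add: C_def mmul_sum_list_left mmul_assoc cong: map_cong)
    also have "\<dots> = mmul X (kmat X Ks) A" by (simp add: kmat_def mmul_sum_list_left o_def)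
    also have "\<dots> = A"
    proof -
      have "mmul X (Idm X) A - mmul X (kmat X Ks) A = 0" using d by (simp add: mmul_diff_left)
      thus ?thesis using clA f by (simp add: mmul_Idm_left)
    qed
    finally show ?thesis .
  qed
  have AC: "mmul X A C = A"
  proof -
    have "adj (mmul X C A) = adj A" using CA by simp
    thus ?thesis using adjC pA by (simp add: adj_mmul pj_def)
  qed
  have dec: "C = A + mmul X (mmul X Ap C) Ap"
  proof -
    have s1: "mmul X Ap C = C - A"
      using clC f by (simp add: Ap_def mmul_diff_left mmul_Idm_left AC)
    have "mmul X (mmul X Ap C) Ap = mmul X (C - A) Ap" by (simp only: s1)
    also have "\<dots> = mmul X (C - A) (Idm X) - mmul X (C - A) A"
      by (simp add: Ap_def mmul_diff_right)
    also have "\<dots> = (C - A) - (mmul X C A - mmul X A A)"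
      using clC clA f by (simp add: mmul_Idm_right mmul_diff_left)
    also have "\<dots> = C - A" using pA by (simp add: CA pj_def)
    finally show ?thesis by simp
  qed
  have trm: "0 \<le> Re (qtrace X (mmul X (mmul X (mmul X Ap (mmul X (adj K) (mmul X B K))) Ap) \<rho>))" for K
  proof -
    have "qtrace X (mmul X (mmul X (mmul X Ap (mmul X (adj K) (mmul X B K))) Ap) \<rho>)
        = qtrace X (mmul X Ap (mmul X (mmul X (adj K) (mmul X B K)) (mmul X Ap \<rho>)))"
      by (simp add: mmul_assoc)
    also have "\<dots> = qtrace X (mmul X (mmul X (mmul X (adj K) (mmul X B K)) (mmul X Ap \<rho>)) Ap)"
      by (rule qtrace_comm)
    also have "\<dots> = qtrace X (mmul X (mmul X (mmul X (mmul X B K) Ap) \<rho>) (adj (mmul X (mmul X B K) Ap)))"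
    proof -
      have "qtrace X (mmul X (mmul X (mmul X (adj K) (mmul X B K)) (mmul X Ap \<rho>)) Ap)
         = qtrace X (mmul X (adj K) (mmul X (mmul X B K) (mmul X (mmul X Ap \<rho>) Ap)))"
        by (simp add: mmul_assoc)
      also have "\<dots> = qtrace X (mmul X (mmul X (mmul X B K) (mmul X (mmul X Ap \<rho>) Ap)) (adj K))"
        by (rule qtrace_comm)
      also have "\<dots> = qtrace X (mmul X (mmul X (mmul X B B) (mmul X K (mmul X (mmul X Ap \<rho>) Ap))) (adj K))"
        using pB by (simp add: pj_def mmul_assoc)
      also have "\<dots> = qtrace X (mmul X B (mmul X (mmul X K (mmul X (mmul X Ap \<rho>) Ap)) (mmul X (adj K) B)))"
        by (simp add: mmul_assoc qtrace_comm[of X B])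
      also have "\<dots> = qtrace X (mmul X (mmul X (mmul X (mmul X B K) Ap) \<rho>) (adj (mmul X (mmul X B K) Ap)))"
        using pB pAp by (simp add: mmul_assoc adj_mmul pj_def)
      finally show ?thesis .
    qed
    finally show ?thesis using trace_conj_pos[OF pr] by simp
  qed
  have "qtrace X (mmul X C \<rho>) = qtrace X (mmul X A \<rho>) + qtrace X (mmul X (mmul X (mmul X Ap C) Ap) \<rho>)"
    by (subst dec) (simp add: mmul_add_left qtrace_add)
  moreover have "0 \<le> Re (qtrace X (mmul X (mmul X (mmul X Ap C) Ap) \<rho>))"
    unfolding C_def
    by (simp add: mmul_sum_list_left mmul_sum_list_right qtrace_sum_list Re_sum_list o_def)
      (rule sum_list_nonneg, use trm in auto)
  ultimately show ?thesis using e1 by simp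
qed


lemma merge_outside: "q \<notin> W \<Longrightarrow> merge W a s q = s q"
  by (simp add: merge_def)

lemma merge_inside: "q \<in> W \<Longrightarrow> merge W a s q = a q"
  by (simp add: merge_def)

lemma cl_kraus_term: "cl X K \<Longrightarrow> cl X (mmul X (mmul X K A) (adj K))"
  by (auto simp: cl_def mmul_def adj_def)


lemma restr_merge[simp]: "a \<in> asg V \<Longrightarrow> restr V (merge V a s) = a"
  by (auto simp: restr_def merge_def asg_def fun_eq_iff)

lemma merge_restr[simp]: "merge V (restr V s) s = s"
  by (auto simp: restr_def merge_def fun_eq_iff)

lemma merge_merge[simp]: "merge V a (merge V b s) = merge V a s"
  by (auto simp: merge_def fun_eq_iff)

lemma merge_asg: "V \<subseteq> X \<Longrightarrow> a \<in> asg V \<Longrightarrow> s \<in> asg X \<Longrightarrow> merge V a s \<in> asg X"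
  by (auto simp: merge_def asg_def)

lemma restr_asg[simp]: "restr V s \<in> asg V"
  by (auto simp: restr_def asg_def)

lemma restr_restr: "V \<subseteq> W \<Longrightarrow> restr V (restr W s) = restr V s"
  by (auto simp: restr_def fun_eq_iff)

lemma restr_eq_iff: "s \<in> asg V \<Longrightarrow> restr V s = s"
  by (auto simp: restr_def asg_def fun_eq_iff)

lemma bij_merge: "V \<subseteq> X \<Longrightarrow> s \<in> asg X \<Longrightarrow>
   bij_betw (\<lambda>a. merge V a s) (asg V) {u\<in>asg X. \<forall>q\<in>X-V. s q = u q}"
proof -
  assume VX: "V \<subseteq> X" and s: "s \<in> asg X"
  show ?thesis
  proof (rule bij_betwI[where g = "restr V"])
    show "(\<lambda>a. merge V a s) \<in> asg V \<rightarrow> {u \<in> asg X. \<forall>q\<in>X - V. s q = u q}"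
      using VX s by (auto simp: merge_asg) (auto simp: merge_def)
    show "restr V \<in> {u \<in> asg X. \<forall>q\<in>X - V. s q = u q} \<rightarrow> asg V" by simp
    show "\<And>x. x \<in> asg V \<Longrightarrow> restr V (merge V x s) = x" by simp
    show "\<And>y. y \<in> {u \<in> asg X. \<forall>q\<in>X - V. s q = u q} \<Longrightarrow> merge V (restr V y) s = y"
      using s by (auto simp: merge_def restr_def asg_def fun_eq_iff)
  qed
qed

lemma sum_agree:
  assumes f: "finite X" and VX: "V \<subseteq> X" and s: "s \<in> asg X"
  shows "(\<Sum>u\<in>asg X. if (\<forall>q\<in>X-V. s q = u q) then g u else 0) = (\<Sum>a\<in>asg V. g (merge V a s))"
proof -
  have "(\<Sum>u\<in>asg X. if (\<forall>q\<in>X-V. s q = u q) then g u else 0) = (\<Sum>u\<in>{u\<in>asg X. \<forall>q\<in>X-V. s q = u q}. g u)"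
    using f by (simp add: sum.inter_filter finite_asg)
  also have "\<dots> = (\<Sum>a\<in>asg V. g (merge V a s))"
    by (rule sum.reindex_bij_betw[OF bij_merge[OF VX s], symmetric])
  finally show ?thesis .
qed

lemma sum_split:
  assumes f: "finite X" and VX: "V \<subseteq> X"
  shows "(\<Sum>s\<in>asg X. g s) = (\<Sum>r\<in>asg (X-V). \<Sum>a\<in>asg V. g (merge V a r))"
proof -
  have b: "bij_betw (\<lambda>(r,a). merge V a r) (asg (X-V) \<times> asg V) (asg X)"
  proof (rule bij_betwI[where g = "\<lambda>s. (restr (X-V) s, restr V s)"])
    show "(\<lambda>(r, a). merge V a r) \<in> asg (X - V) \<times> asg V \<rightarrow> asg X"
      using VX by (auto simp: merge_def asg_def)
    show "(\<lambda>s. (restr (X - V) s, restr V s)) \<in> asg X \<rightarrow> asg (X - V) \<times> asg V" by simp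
    show "\<And>x. x \<in> asg (X - V) \<times> asg V \<Longrightarrow> (restr (X - V) ((\<lambda>(r, a). merge V a r) x), restr V ((\<lambda>(r, a). merge V a r) x)) = x"
      by (auto simp: merge_def restr_def asg_def fun_eq_iff)
    show "\<And>y. y \<in> asg X \<Longrightarrow> (\<lambda>(r, a). merge V a r) (restr (X - V) y, restr V y) = y"
      using VX by (auto simp: merge_def restr_def asg_def fun_eq_iff)
  qed
  have "(\<Sum>r\<in>asg (X-V). \<Sum>a\<in>asg V. g (merge V a r)) = (\<Sum>(r,a)\<in>asg (X-V) \<times> asg V. g (merge V a r))"
    by (rule sum.cartesian_product)
  also have "\<dots> = (\<Sum>s\<in>asg X. g s)"
    using sum.reindex_bij_betw[OF b, of g] by (simp add: case_prod_beta')
  finally show ?thesis by simp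
qed

definition ex :: "nat set \<Rightarrow> nat set \<Rightarrow> qop \<Rightarrow> qop" where
  "ex W X A = clip X (ext_op W X A)"

lemma cl_ex[simp]: "cl X (ex W X A)" by (simp add: ex_def)

lemma ex_apply: "s \<in> asg X \<Longrightarrow> t \<in> asg X \<Longrightarrow> ex W X A s t =
   (if \<forall>q\<in>X-W. s q = t q then A (restr W s) (restr W t) else 0)"
  by (simp add: ex_def clip_def ext_op_def)

lemma ex_mmul:
  assumes f: "finite X" and WX: "W \<subseteq> X"
  shows "mmul X (ex W X A) (ex W X B) = ex W X (mmul W A B)"
proof (rule ext, rule ext)
  fix s t
  show "mmul X (ex W X A) (ex W X B) s t = ex W X (mmul W A B) s t"
  proof (cases "s \<in> asg X \<and> t \<in> asg X")
    case True
    have "mmul X (ex W X A) (ex W X B) s t =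
      (\<Sum>u\<in>asg X. if (\<forall>q\<in>X-W. s q = u q) then A (restr W s) (restr W u) *
          (if \<forall>q\<in>X-W. u q = t q then B (restr W u) (restr W t) else 0) else 0)"
      unfolding mmul_def using True by (intro sum.cong refl) (auto simp: ex_apply)
    also have "\<dots> = (\<Sum>a\<in>asg W. A (restr W s) (restr W (merge W a s)) *
          (if \<forall>q\<in>X-W. merge W a s q = t q then B (restr W (merge W a s)) (restr W t) else 0))"
      by (rule sum_agree[OF f WX]) (use True in simp)
    also have "\<dots> = (if \<forall>q\<in>X-W. s q = t q then (\<Sum>a\<in>asg W. A (restr W s) a * B a (restr W t)) else 0)"
    proof (cases "\<forall>q\<in>X-W. s q = t q")
      case c: True
      thus ?thesis by (auto simp: merge_outside intro!: sum.cong)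
    next
      case c: False
      then obtain q where q: "q \<in> X - W" "s q \<noteq> t q" by auto
      have "(\<Sum>a\<in>asg W. A (restr W s) (restr W (merge W a s)) *
          (if \<forall>q\<in>X-W. merge W a s q = t q then B (restr W (merge W a s)) (restr W t) else 0)) = (\<Sum>a\<in>asg W. 0)"
        by (rule sum.cong[OF refl]) (use q in \<open>auto simp: merge_outside\<close>)
      thus ?thesis using c by (simp only: sum.neutral_const if_False)
    qed
    also have "\<dots> = ex W X (mmul W A B) s t"
      using True by (simp add: ex_apply mmul_def)
    finally show ?thesis .
  next
    case False
    thus ?thesis by (auto simp: ex_def clip_def mmul_def)
  qed
qed

lemma ex_Idm: "finite X \<Longrightarrow> W \<subseteq> X \<Longrightarrow> ex W X (Idm W) = Idm X"
  by (auto simp: fun_eq_iff ex_def clip_def ext_op_def Idm_def restr_def asg_def)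

lemma ex_diff: "ex W X (A - B) = ex W X A - ex W X B"
  by (auto simp: fun_eq_iff ex_def clip_def ext_op_def)

lemma ex_adj: "adj (ex W X A) = ex W X (adj A)"
  by (auto simp: fun_eq_iff ex_def clip_def ext_op_def adj_def)

lemma ex_zero: "ex W X 0 = 0"
  by (auto simp: fun_eq_iff ex_def clip_def ext_op_def)

lemma ex_add: "ex W X (A + B) = ex W X A + ex W X B"
  by (auto simp: fun_eq_iff ex_def clip_def ext_op_def algebra_simps)

lemma ex_scale: "ex W X (\<lambda>s t. c * A s t) = (\<lambda>s t. c * ex W X A s t)"
  by (auto simp: fun_eq_iff ex_def clip_def ext_op_def)

lemma ex_sum_list: "ex W X (sum_list (map f xs)) = sum_list (map (\<lambda>x. ex W X (f x)) xs)"
  by (induction xs) (simp_all only: list.map sum_list.Nil sum_list.Cons ex_add ex_zero)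

lemma ex_clip: "ex W X (clip W A) = ex W X A"
  by (auto simp: fun_eq_iff ex_def clip_def ext_op_def)

lemma ex_trans:
  assumes "V \<subseteq> W" "W \<subseteq> X"
  shows "ex W X (ex V W A) = ex V X A"
  using assms by (auto simp: fun_eq_iff ex_def clip_def ext_op_def restr_restr) (auto simp: restr_def)

lemma ex_same: "ex W W A = clip W A"
  by (auto simp: fun_eq_iff ex_def clip_def ext_op_def restr_eq_iff)

lemma projector_ex: "finite X \<Longrightarrow> W \<subseteq> X \<Longrightarrow> projector W P \<Longrightarrow> pj X (ex W X P)"
proof -
  assume f: "finite X" and WX: "W \<subseteq> X" and p: "projector W P"
  have q: "pj W (clip W P)" by (rule projector_pj[OF p])
  have "ex W X P = ex W X (clip W P)" by (simp add: ex_clip)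
  moreover have "pj X (ex W X (clip W P))"
    using q f WX by (auto simp: pj_def ex_mmul ex_adj)
  ultimately show ?thesis by simp
qed

lemma pj_ex: "finite X \<Longrightarrow> W \<subseteq> X \<Longrightarrow> pj W P \<Longrightarrow> pj X (ex W X P)"
  by (auto simp: pj_def ex_mmul ex_adj)

lemma kraus_ext:
  assumes f: "finite X" and VX: "V \<subseteq> X" and k: "is_kraus V E Es"
  shows "kraus_cl X (ext_so V E) (map (ex V X) Es)"
  unfolding kraus_cl_def
proof (intro conjI allI ballI)
  show "\<And>K. K \<in> set (map (ex V X) Es) \<Longrightarrow> cl X K" by auto
  fix A
  show "clip X (ext_so V E A) = sum_list (map (\<lambda>K. mmul X (mmul X K A) (adj K)) (map (ex V X) Es))"
  proof (rule ext, rule ext)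
    fix s t
    show "clip X (ext_so V E A) s t = sum_list (map (\<lambda>K. mmul X (mmul X K A) (adj K)) (map (ex V X) Es)) s t"
    proof (cases "s \<in> asg X \<and> t \<in> asg X")
      case True
      have "clip X (ext_so V E A) s t = E (\<lambda>a b. A (merge V a s) (merge V b t)) (restr V s) (restr V t)"
        using True by (simp add: clip_def ext_so_def)
      also have "\<dots> = (\<Sum>K\<leftarrow>Es. mmul V (mmul V K (\<lambda>a b. A (merge V a s) (merge V b t))) (adj K) (restr V s) (restr V t))"
        using k by (simp add: is_kraus_def)
      also have "\<dots> = (\<Sum>K\<leftarrow>Es. mmul X (mmul X (ex V X K) A) (adj (ex V X K)) s t)"
      proof (rule arg_cong[where f = sum_list], rule map_cong[OF refl])
        fix K
        have "mmul X (mmul X (ex V X K) A) (adj (ex V X K)) s t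
          = (\<Sum>w\<in>asg X. (\<Sum>u\<in>asg X. ex V X K s u * A u w) * cnj (ex V X K t w))"
          by (simp add: mmul_def adj_def)
        also have "\<dots> = (\<Sum>w\<in>asg X. if (\<forall>q\<in>X-V. t q = w q) then
              (\<Sum>u\<in>asg X. if (\<forall>q\<in>X-V. s q = u q) then K (restr V s) (restr V u) * A u w else 0)
                * cnj (K (restr V t) (restr V w)) else 0)"
          using True by (intro sum.cong refl) (auto simp: ex_apply intro!: sum.cong)
        also have "\<dots> = (\<Sum>b\<in>asg V. (\<Sum>u\<in>asg X. if (\<forall>q\<in>X-V. s q = u q) then K (restr V s) (restr V u) * A u (merge V b t) else 0)
                * cnj (K (restr V t) b))"
          by (subst sum_agree[OF f VX]) (use True in auto)
        also have "\<dots> = (\<Sum>b\<in>asg V. (\<Sum>a\<in>asg V. K (restr V s) a * A (merge V a s) (merge V b t))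
                * cnj (K (restr V t) b))"
          by (intro sum.cong refl, subst sum_agree[OF f VX]) (use True in auto)
        also have "\<dots> = mmul V (mmul V K (\<lambda>a b. A (merge V a s) (merge V b t))) (adj K) (restr V s) (restr V t)"
          by (simp add: mmul_def adj_def)
        finally show "mmul V (mmul V K (\<lambda>a b. A (merge V a s) (merge V b t))) (adj K) (restr V s) (restr V t)
             = mmul X (mmul X (ex V X K) A) (adj (ex V X K)) s t" by simp
      qed
      also have "\<dots> = sum_list (map (\<lambda>K. mmul X (mmul X K A) (adj K)) (map (ex V X) Es)) s t"
        by (simp add: sum_list_apply_fun o_def)
      finally show ?thesis .
    next
      case False
      have "cl X (sum_list (map (\<lambda>K. mmul X (mmul X K A) (adj K)) (map (ex V X) Es)))"
        by (intro cl_sum_list) (auto intro: cl_kraus_term)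
      thus ?thesis using False by (auto simp: clip_def cl_def)
    qed
  qed
qed


lemma tn_ext:
  assumes f: "finite X" and VX: "V \<subseteq> X" and k: "is_kraus V E Es" and t: "trace_nonincreasing V E"
  shows "tn X (ext_so V E)"
  unfolding tn_def
proof (intro allI impI)
  fix \<rho> assume pr: "positive X \<rho>"
  define blk where "blk = (\<lambda>s a b. \<rho> (merge V a s) (merge V b s))"
  have fV: "finite V" using f VX finite_subset by blast
  have asgsub: "asg (X - V) \<subseteq> asg X" by (auto simp: asg_def)
  have e1: "qtrace X (ext_so V E \<rho>) = (\<Sum>r\<in>asg (X-V). qtrace V (E (blk r)))"
  proof -
    have "qtrace X (ext_so V E \<rho>) = (\<Sum>s\<in>asg X. E (blk s) (restr V s) (restr V s))"
      by (simp add: qtrace_def ext_so_def blk_def)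
    also have "\<dots> = (\<Sum>r\<in>asg (X-V). \<Sum>a\<in>asg V. E (blk (merge V a r)) (restr V (merge V a r)) (restr V (merge V a r)))"
      by (rule sum_split[OF f VX])
    also have "\<dots> = (\<Sum>r\<in>asg (X-V). qtrace V (E (blk r)))"
      by (simp add: qtrace_def blk_def)
    finally show ?thesis .
  qed
  have e2: "qtrace X \<rho> = (\<Sum>r\<in>asg (X-V). qtrace V (blk r))"
  proof -
    have "qtrace X \<rho> = (\<Sum>r\<in>asg (X-V). \<Sum>a\<in>asg V. \<rho> (merge V a r) (merge V a r))"
      unfolding qtrace_def by (rule sum_split[OF f VX])
    thus ?thesis by (simp add: qtrace_def blk_def)
  qed
  have pb: "positive V (blk r)" if r: "r \<in> asg X" for r
    unfolding positive_def Let_def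
  proof (intro allI)
    fix \<psi> :: qvec
    define \<psi>' where "\<psi>' = (\<lambda>u. if (\<forall>q\<in>X-V. r q = u q) then \<psi> (restr V u) else 0)"
    have "(\<Sum>s\<in>asg X. \<Sum>t\<in>asg X. cnj (\<psi>' s) * \<rho> s t * \<psi>' t)
       = (\<Sum>s\<in>asg X. if (\<forall>q\<in>X-V. r q = s q) then (\<Sum>t\<in>asg X. if (\<forall>q\<in>X-V. r q = t q) then
            cnj (\<psi> (restr V s)) * \<rho> s t * \<psi> (restr V t) else 0) else 0)"
      by (intro sum.cong refl) (auto simp: \<psi>'_def intro!: sum.cong)
    also have "\<dots> = (\<Sum>a\<in>asg V. \<Sum>b\<in>asg V. cnj (\<psi> a) * blk r a b * \<psi> b)"
      by (subst sum_agree[OF f VX r], subst sum_agree[OF f VX r]) (simp add: blk_def)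
    finally have eq: "(\<Sum>s\<in>asg X. \<Sum>t\<in>asg X. cnj (\<psi>' s) * \<rho> s t * \<psi>' t) = (\<Sum>a\<in>asg V. \<Sum>b\<in>asg V. cnj (\<psi> a) * blk r a b * \<psi> b)" .
    show "Im (\<Sum>s\<in>asg V. \<Sum>t\<in>asg V. cnj (\<psi> s) * blk r s t * \<psi> t) = 0 \<and>
          0 \<le> Re (\<Sum>s\<in>asg V. \<Sum>t\<in>asg V. cnj (\<psi> s) * blk r s t * \<psi> t)"
      using pr unfolding positive_def Let_def eq[symmetric] by blast
  qed
  have "Re (qtrace X (ext_so V E \<rho>)) = (\<Sum>r\<in>asg (X-V). Re (qtrace V (E (blk r))))" by (simp add: e1)
  also have "\<dots> \<le> (\<Sum>r\<in>asg (X-V). Re (qtrace V (blk r)))"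
    by (rule sum_mono) (use t pb asgsub in \<open>auto simp: trace_nonincreasing_def\<close>)
  also have "\<dots> = Re (qtrace X \<rho>)" by (simp add: e2)
  finally show "Re (qtrace X (ext_so V E \<rho>)) \<le> Re (qtrace X \<rho>)" .
qed

lemma apply_ex_slice:
  assumes f: "finite X" and VX: "V \<subseteq> X" and s: "s \<in> asg X"
  shows "apply_op X (ex V X N) \<psi> s = apply_op V N (\<lambda>a. \<psi> (merge V a s)) (restr V s)"
proof -
  have "apply_op X (ex V X N) \<psi> s = (\<Sum>u\<in>asg X. if (\<forall>q\<in>X-V. s q = u q) then N (restr V s) (restr V u) * \<psi> u else 0)"
    unfolding apply_op_def using s by (intro sum.cong refl) (auto simp: ex_apply)
  also have "\<dots> = apply_op V N (\<lambda>a. \<psi> (merge V a s)) (restr V s)"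
    by (subst sum_agree[OF f VX s]) (simp add: apply_op_def)
  finally show ?thesis .
qed

lemma kraus_term_clip: "mmul X (mmul X (clip X K) A) (adj (clip X K)) = clip X (mmul X (mmul X K A) (adj K))"
  by (auto simp: fun_eq_iff mmul_def clip_def adj_def intro!: sum.cong)

lemma clip_sum_list: "clip X (sum_list (map f xs)) = sum_list (map (\<lambda>x. clip X (f x)) xs)"
proof (rule ext, rule ext)
  fix s t
  show "clip X (sum_list (map f xs)) s t = sum_list (map (\<lambda>x. clip X (f x)) xs) s t"
  proof (cases "s \<in> asg X \<and> t \<in> asg X")
    case True thus ?thesis by (simp add: clip_def sum_list_apply_fun)
  next
    case False
    hence z: "(\<lambda>x. clip X (f x) s t) = (\<lambda>x. 0)" by (auto simp: clip_def)
    have "sum_list (map (\<lambda>x. clip X (f x)) xs) s t = sum_list (map (\<lambda>x. clip X (f x) s t) xs)"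
      by (simp only: sum_list_apply_fun)
    also have "\<dots> = 0" by (simp only: z) simp
    moreover have "clip X (sum_list (map f xs)) s t = 0" by (simp only: clip_def if_not_P[OF False])
    ultimately show ?thesis by simp
  qed
qed

lemma kraus_V: "is_kraus V E Es \<Longrightarrow> kraus_cl V E (map (clip V) Es)"
  unfolding kraus_cl_def
proof (intro conjI allI ballI)
  assume k: "is_kraus V E Es"
  show "\<And>K. K \<in> set (map (clip V) Es) \<Longrightarrow> cl V K" by auto
  fix A
  have "clip V (E A) = clip V (sum_list (map (\<lambda>K. mmul V (mmul V K A) (adj K)) Es))"
    using k by (auto simp: fun_eq_iff clip_def is_kraus_def sum_list_apply_fun)
  also have "\<dots> = sum_list (map (\<lambda>K. clip V (mmul V (mmul V K A) (adj K))) Es)"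
    by (rule clip_sum_list)
  also have "\<dots> = sum_list (map (\<lambda>K. mmul V (mmul V K A) (adj K)) (map (clip V) Es))"
    by (simp add: kraus_term_clip o_def)
  finally show "clip V (E A) = sum_list (map (\<lambda>K. mmul V (mmul V K A) (adj K)) (map (clip V) Es))" .
qed

lemma qfD_eq:
  assumes f: "finite X" and k: "kraus_cl X G Ks"
  shows "ip X x (apply_op X (Idm X - kmat X Ks) x) = qtrace X (outer x x) - qtrace X (G (outer x x))"
  by (simp add: kmat_def apply_diff ip_diff_right ip_apply_Idm_right f apply_sum_list
          ip_sum_list_right apply_mmul ip_adj' o_def pure_trace_G[OF k] qtrace_outer)

lemma qfD_psd:
  assumes f: "finite X" and k: "kraus_cl X G Ks" and t: "tn X G"
  shows "0 \<le> Re (ip X x (apply_op X (Idm X - kmat X Ks) x))"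
  unfolding qfD_eq[OF f k] using t positive_outer by (simp add: tn_def)

lemma adj_D: "adj (Idm X - kmat X Ks) = Idm X - kmat X Ks"
  by (simp add: kmat_def adj_diff adj_sum_list adj_mmul o_def)

lemma term_space_iff:
  assumes f: "finite V" and k: "is_kraus V E Es" and t: "trace_nonincreasing V E"
  shows "\<psi> \<in> term_space V E \<longleftrightarrow> vec_in V \<psi> \<and> (\<forall>s\<in>asg V. apply_op V (Idm V - kmat V (map (clip V) Es)) \<psi> s = 0)"
proof -
  define D where "D = Idm V - kmat V (map (clip V) Es)"
  have kV: "kraus_cl V E (map (clip V) Es)" by (rule kraus_V[OF k])
  have tV: "tn V E" using t by (simp add: tn_def trace_nonincreasing_def)
  have qf: "ip V \<psi> (apply_op V D \<psi>) = qtrace V (outer \<psi> \<psi>) - qtrace V (E (outer \<psi> \<psi>))"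
    unfolding D_def by (rule qfD_eq[OF f kV])
  show ?thesis
  proof
    assume a: "\<psi> \<in> term_space V E"
    hence "ip V \<psi> (apply_op V D \<psi>) = 0" using qf by (simp add: term_space_def)
    hence "apply_op V D \<psi> s = 0" if "s \<in> asg V" for s
      using psd_kernel[OF f _ qfD_psd[OF f kV tV] _ that, of \<psi>] adj_D by (simp add: D_def)
    thus "vec_in V \<psi> \<and> (\<forall>s\<in>asg V. apply_op V (Idm V - kmat V (map (clip V) Es)) \<psi> s = 0)"
      using a by (simp add: term_space_def D_def)
  next
    assume a: "vec_in V \<psi> \<and> (\<forall>s\<in>asg V. apply_op V (Idm V - kmat V (map (clip V) Es)) \<psi> s = 0)"
    hence "ip V \<psi> (apply_op V D \<psi>) = 0" by (simp add: ip_def D_def)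
    thus "\<psi> \<in> term_space V E" using qf a by (simp add: term_space_def)
  qed
qed


definition fsc :: "complex \<Rightarrow> ('i \<Rightarrow> complex) \<Rightarrow> ('i \<Rightarrow> complex)" where
  "fsc c x = (\<lambda>i. c * x i)"

interpretation fv: vector_space "fsc :: complex \<Rightarrow> ('i \<Rightarrow> complex) \<Rightarrow> ('i \<Rightarrow> complex)"
  by unfold_locales (auto simp: fsc_def fun_eq_iff algebra_simps)

definition gip :: "'i set \<Rightarrow> ('i \<Rightarrow> complex) \<Rightarrow> ('i \<Rightarrow> complex) \<Rightarrow> complex" where
  "gip J x y = (\<Sum>j\<in>J. cnj (x j) * y j)"

definition supp_on :: "'i set \<Rightarrow> ('i \<Rightarrow> complex) \<Rightarrow> bool" where
  "supp_on J x \<longleftrightarrow> (\<forall>j. j \<notin> J \<longrightarrow> x j = 0)"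

definition onb :: "'i set \<Rightarrow> ('i \<Rightarrow> complex) set \<Rightarrow> bool" where
  "onb J U \<longleftrightarrow> finite U \<and> (\<forall>u\<in>U. supp_on J u) \<and> (\<forall>u\<in>U. \<forall>w\<in>U. gip J u w = (if u = w then 1 else 0))"

definition prj :: "'i set \<Rightarrow> ('i \<Rightarrow> complex) set \<Rightarrow> ('i \<Rightarrow> complex) \<Rightarrow> ('i \<Rightarrow> complex)" where
  "prj J U x = (\<lambda>i. \<Sum>u\<in>U. gip J u x * u i)"

lemma gip_add_right: "gip J x (y + z) = gip J x y + gip J x z"
  by (simp add: gip_def sum.distrib algebra_simps)
lemma gip_diff_right: "gip J x (y - z) = gip J x y - gip J x z"
  by (simp add: gip_def sum_subtractf algebra_simps)
lemma gip_scale_right: "gip J x (fsc c y) = c * gip J x y"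
  by (simp add: gip_def fsc_def sum_distrib_left algebra_simps)
lemma gip_scale_left: "gip J (fsc c y) x = cnj c * gip J y x"
  by (simp add: gip_def fsc_def sum_distrib_left algebra_simps)
lemma gip_conj: "cnj (gip J x y) = gip J y x"
  by (simp add: gip_def mult.commute)
lemma gip_sum_right: "gip J x (\<lambda>i. \<Sum>u\<in>U. f u * u i) = (\<Sum>u\<in>U. f u * gip J x u)"
  by (simp add: gip_def sum_distrib_left sum.swap[of _ J] algebra_simps)

lemma prj_add: "prj J U (x + y) = prj J U x + prj J U y"
  by (simp add: prj_def fun_eq_iff gip_add_right sum.distrib algebra_simps)
lemma prj_scale: "prj J U (fsc c x) = fsc c (prj J U x)"
  by (simp add: prj_def gip_scale_right) (simp add: fsc_def fun_eq_iff sum_distrib_left algebra_simps)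

lemma prj_as_sum: "prj J U x = (\<Sum>u\<in>U. fsc (gip J u x) u)"
  by (simp add: prj_def fun_eq_iff fsc_def sum_apply_fun)

lemma prj_in_span: "prj J U x \<in> fv.span U"
  unfolding prj_as_sum by (intro fv.span_sum fv.span_scale fv.span_base)

lemma prj_onb_fix: "onb J U \<Longrightarrow> u \<in> U \<Longrightarrow> prj J U u = u"
proof -
  assume o: "onb J U" and u: "u \<in> U"
  have "prj J U u = (\<lambda>i. \<Sum>w\<in>U. (if w = u then u i else 0))"
    unfolding prj_def using o u by (intro ext sum.cong refl) (auto simp: onb_def)
  also have "\<dots> = u" using o u by (simp add: onb_def sum.delta')
  finally show ?thesis .
qed

lemma prj_fix_span: "onb J U \<Longrightarrow> x \<in> fv.span U \<Longrightarrow> prj J U x = x"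
proof -
  assume o: "onb J U" and x: "x \<in> fv.span U"
  have "fv.subspace {x. prj J U x = x}"
    unfolding fv.subspace_def
    by (auto simp: prj_add prj_scale) (simp add: prj_def gip_def fun_eq_iff)
  moreover have "U \<subseteq> {x. prj J U x = x}" using prj_onb_fix[OF o] by auto
  ultimately have "fv.span U \<subseteq> {x. prj J U x = x}" by (rule fv.span_minimal[rotated])
  thus ?thesis using x by auto
qed

lemma prj_idem: "onb J U \<Longrightarrow> prj J U (prj J U x) = prj J U x"
  by (rule prj_fix_span[OF _ prj_in_span])

lemma gip_prj_orth: "onb J U \<Longrightarrow> u \<in> U \<Longrightarrow> gip J u (x - prj J U x) = 0"
proof -
  assume o: "onb J U" and u: "u \<in> U"
  have "gip J u (prj J U x) = (\<Sum>w\<in>U. gip J w x * gip J u w)"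
    unfolding prj_def by (rule gip_sum_right)
  also have "\<dots> = (\<Sum>w\<in>U. if w = u then gip J u x else 0)"
    using o u by (intro sum.cong refl) (auto simp: onb_def)
  also have "\<dots> = gip J u x" using o u by (simp add: onb_def sum.delta')
  finally show ?thesis by (simp add: gip_diff_right)
qed

lemma gip_span_orth: "onb J U \<Longrightarrow> v \<in> fv.span U \<Longrightarrow> gip J v (x - prj J U x) = 0"
proof -
  assume o: "onb J U" and v: "v \<in> fv.span U"
  have "v = prj J U v" using prj_fix_span[OF o v] by simp
  hence "gip J v (x - prj J U x) = cnj (gip J (x - prj J U x) (prj J U v))" by (metis gip_conj)
  also have "gip J (x - prj J U x) (prj J U v) = (\<Sum>w\<in>U. gip J w v * gip J (x - prj J U x) w)"
    unfolding prj_def by (rule gip_sum_right)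
  also have "\<dots> = 0"
    using gip_prj_orth[OF o] by (intro sum.neutral) (metis complex_cnj_zero gip_conj mult_zero_right)
  finally show ?thesis by (simp only: complex_cnj_zero)
qed

lemma sup_prj: "onb J U \<Longrightarrow> supp_on J (prj J U x)"
  by (auto simp: supp_on_def prj_def onb_def intro!: sum.neutral)

lemma gip_self_pos: "finite J \<Longrightarrow> supp_on J w \<Longrightarrow> w \<noteq> 0 \<Longrightarrow> 0 < Re (gip J w w)"
proof -
  assume f: "finite J" and s: "supp_on J w" and w: "w \<noteq> 0"
  then obtain j where j: "w j \<noteq> 0" by (auto simp: fun_eq_iff)
  hence jJ: "j \<in> J" using s by (auto simp: supp_on_def)
  have "Re (gip J w w) = (\<Sum>i\<in>J. (cmod (w i))\<^sup>2)" by (simp add: gip_def cnj_mult_self)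
  also have "\<dots> \<ge> (cmod (w j))\<^sup>2"
    using f jJ by (intro member_le_sum) auto
  finally show ?thesis using j by (smt (verit) zero_less_power2 norm_eq_zero)
qed

lemma gram_schmidt:
  assumes fJ: "finite J"
  shows "finite S \<Longrightarrow> (\<forall>v\<in>S. supp_on J v) \<Longrightarrow> \<exists>U. onb J U \<and> fv.span U = fv.span S"
proof (induction S rule: finite_induct)
  case empty
  show ?case by (intro exI[of _ "{}"]) (simp add: onb_def)
next
  case (insert v S)
  then obtain U where o: "onb J U" and sp: "fv.span U = fv.span S" by auto
  have sv: "supp_on J v" using insert by auto
  define w where "w = v - prj J U v"
  show ?case
  proof (cases "w = 0")
    case True
    hence "v \<in> fv.span U" using prj_in_span[of J U v] by (simp add: w_def)
    hence "fv.span (insert v S) = fv.span S" using sp by (simp add: fv.span_redundant)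
    thus ?thesis using o sp by auto
  next
    case False
    have sw: "supp_on J w" using sv sup_prj[OF o, of v] by (auto simp: supp_on_def w_def)
    define n where "n = Re (gip J w w)"
    have n0: "0 < n" using gip_self_pos[OF fJ sw False] by (simp add: n_def)
    have gww: "gip J w w = complex_of_real n"
      by (simp add: n_def gip_def cnj_mult_self complex_eq_iff)
    define u0 where "u0 = fsc (complex_of_real (1 / sqrt n)) w"
    have su0: "supp_on J u0" using sw by (simp add: supp_on_def u0_def fsc_def)
    have orth: "gip J u w = 0" if "u \<in> U" for u using gip_prj_orth[OF o that] by (simp add: w_def)
    have orth0: "gip J u u0 = 0" if "u \<in> U" for u using orth[OF that] by (simp add: u0_def gip_scale_right)
    have orth0': "gip J u0 u = 0" if "u \<in> U" for u using orth0[OF that] by (metis complex_cnj_zero gip_conj)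
    have n1: "gip J u0 u0 = 1"
    proof -
      have "gip J u0 u0 = complex_of_real (1 / sqrt n) * complex_of_real (1 / sqrt n) * gip J w w"
        by (simp add: u0_def gip_scale_left gip_scale_right)
      also have "\<dots> = 1" using n0 by (simp add: gww field_simps flip: of_real_mult)
      finally show ?thesis .
    qed
    have u0U: "u0 \<notin> U" using orth0 n1 by force
    have oU': "onb J (insert u0 U)"
      using o su0 orth0 orth0' n1 u0U unfolding onb_def by auto
    have "fv.span (insert u0 U) = fv.span (insert v S)"
    proof
      have "u0 \<in> fv.span (insert v S)"
      proof -
        have "prj J U v \<in> fv.span (insert v S)"
          using prj_in_span[of J U v] sp fv.span_mono[of S "insert v S"] by auto
        hence "w \<in> fv.span (insert v S)" unfolding w_def
          by (intro fv.span_diff) (auto intro: fv.span_base)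
        thus ?thesis unfolding u0_def by (rule fv.span_scale)
      qed
      moreover have "U \<subseteq> fv.span (insert v S)"
        using sp fv.span_superset[of U] fv.span_mono[of S "insert v S"] by auto
      ultimately show "fv.span (insert u0 U) \<subseteq> fv.span (insert v S)"
        by (intro fv.span_minimal) auto
    next
      have "v = fsc (complex_of_real (sqrt n)) u0 + prj J U v"
        using n0 by (simp add: u0_def w_def fsc_def fun_eq_iff)
      moreover have "fsc (complex_of_real (sqrt n)) u0 \<in> fv.span (insert u0 U)"
        by (intro fv.span_scale fv.span_base) simp
      moreover have "prj J U v \<in> fv.span (insert u0 U)"
        using prj_in_span[of J U v] fv.span_mono[of U "insert u0 U"] by auto
      ultimately have "v \<in> fv.span (insert u0 U)" by (metis fv.span_add)
      moreover have "S \<subseteq> fv.span (insert u0 U)"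
        using sp fv.span_superset[of S] fv.span_mono[of U "insert u0 U"] by auto
      ultimately show "fv.span (insert v S) \<subseteq> fv.span (insert u0 U)"
        by (intro fv.span_minimal) auto
    qed
    thus ?thesis using oU' by blast
  qed
qed

lemma separation:
  assumes fJ: "finite J" and fS: "finite S" and sS: "\<forall>v\<in>S. supp_on J v" and sx: "supp_on J x"
    and nx: "x \<notin> fv.span S"
  shows "\<exists>m. (\<forall>v\<in>S. gip J m v = 0) \<and> gip J m x \<noteq> 0"
proof -
  obtain U where o: "onb J U" and sp: "fv.span U = fv.span S" using gram_schmidt[OF fJ fS sS] by blast
  define m where "m = x - prj J U x"
  have m0: "m \<noteq> 0" using nx prj_in_span[of J U x] sp by (auto simp: m_def)
  have sm: "supp_on J m" using sx sup_prj[OF o, of x] by (auto simp: supp_on_def m_def)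
  have orth: "gip J m v = 0" if "v \<in> fv.span S" for v
  proof -
    have "gip J v m = 0" unfolding m_def by (rule gip_span_orth[OF o]) (use that sp in simp)
    thus ?thesis by (metis complex_cnj_zero gip_conj)
  qed
  have "gip J m x = gip J m m + gip J m (prj J U x)"
    by (simp add: m_def gip_add_right[symmetric])
  also have "gip J m (prj J U x) = 0" using orth prj_in_span[of J U x] sp by auto
  finally have "gip J m x = gip J m m" by simp
  moreover have "0 < Re (gip J m m)" by (rule gip_self_pos[OF fJ sm m0])
  ultimately have "gip J m x \<noteq> 0" by auto
  moreover have "\<forall>v\<in>S. gip J m v = 0" using orth fv.span_superset by blast
  ultimately show ?thesis by blast
qed


definition qsc :: "complex \<Rightarrow> qop \<Rightarrow> qop" where
  "qsc c A = (\<lambda>s t. c * A s t)"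

interpretation qv: vector_space qsc
  by unfold_locales (auto simp: qsc_def fun_eq_iff algebra_simps)

lemma sum_qsc_apply: "(\<Sum>a\<in>T. qsc (r a) a) = (\<lambda>s t. \<Sum>a\<in>T. r a * a s t)"
  by (simp add: fun_eq_iff sum_apply_fun qsc_def)

lemma cspan_eq: "cspan S = qv.span S"
  unfolding cspan_def qv.span_explicit sum_qsc_apply by blast

definition frob :: "nat set \<Rightarrow> qop \<Rightarrow> qop \<Rightarrow> complex" where
  "frob V M K = (\<Sum>a\<in>asg V. \<Sum>b\<in>asg V. cnj (M a b) * K a b)"

lemma sep_mat:
  assumes fV: "finite V" and fS: "finite S" and nL: "clip V L \<notin> cspan (clip V ` S)"
  shows "\<exists>M. (\<forall>K\<in>S. frob V M K = 0) \<and> frob V M L \<noteq> 0"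
proof -
  define J where "J = asg V \<times> asg V"
  have fJ: "finite J" using fV by (simp add: J_def finite_asg)
  define Sv where "Sv = (\<lambda>A. case_prod (clip V A)) ` S"
  define x where "x = case_prod (clip V L)"
  have supc: "supp_on J (case_prod (clip V A))" for A by (auto simp: supp_on_def J_def clip_def)
  have gipc: "gip J m (case_prod (clip V A)) = frob V (curry m) A" for m A
  proof -
    have "gip J m (case_prod (clip V A)) = (\<Sum>(a,b)\<in>asg V \<times> asg V. cnj (m (a,b)) * A a b)"
      unfolding gip_def J_def by (intro sum.cong refl) (auto simp: clip_def)
    also have "\<dots> = frob V (curry m) A" by (simp add: frob_def sum.cartesian_product)
    finally show ?thesis .
  qed
  have nx: "x \<notin> fv.span Sv"
  proof
    assume "x \<in> fv.span Sv"
    then obtain t r where t: "finite t" "t \<subseteq> Sv" and xs: "x = (\<Sum>a\<in>t. fsc (r a) a)"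
      unfolding fv.span_explicit by blast
    have xe: "x = (\<lambda>p. \<Sum>a\<in>t. r a * a p)" using xs by (simp add: fun_eq_iff sum_apply_fun fsc_def)
    define F where "F = curry ` t"
    have inj: "inj_on curry t" by (rule inj_onI) (metis case_prod_curry)
    have FS: "F \<subseteq> clip V ` S" using t(2) by (auto simp: F_def Sv_def)
    have "clip V L = (\<lambda>s u. \<Sum>K\<in>F. r (case_prod K) * K s u)"
    proof (intro ext)
      fix s u
      have "clip V L s u = x (s, u)" by (simp add: x_def)
      also have "\<dots> = (\<Sum>a\<in>t. r a * curry a s u)" by (simp add: xe)
      also have "\<dots> = (\<Sum>K\<in>F. r (case_prod K) * K s u)"
        unfolding F_def by (subst sum.reindex[OF inj]) simp
      finally show "clip V L s u = (\<Sum>K\<in>F. r (case_prod K) * K s u)" .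
    qed
    moreover have "finite F" using t(1) by (simp add: F_def)
    ultimately have "clip V L \<in> cspan (clip V ` S)"
      unfolding cspan_def using FS by (intro CollectI exI[of _ F] exI[of _ "\<lambda>K. r (case_prod K)"]) simp
    thus False using nL by simp
  qed
  have "\<exists>m. (\<forall>v\<in>Sv. gip J m v = 0) \<and> gip J m x \<noteq> 0"
    by (rule separation[OF fJ _ _ _ nx]) (use fS supc in \<open>auto simp: Sv_def x_def\<close>)
  then obtain m where m1: "\<forall>v\<in>Sv. gip J m v = 0" and m2: "gip J m x \<noteq> 0" by blast
  show ?thesis
  proof (intro exI[of _ "curry m"] conjI ballI)
    fix K assume "K \<in> S"
    thus "frob V (curry m) K = 0" using m1 gipc by (auto simp: Sv_def)
  next
    show "frob V (curry m) L \<noteq> 0" using m2 gipc by (simp add: x_def)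
  qed
qed

definition Ebd :: "asgn \<Rightarrow> asgn \<Rightarrow> qop" where
  "Ebd b d = (\<lambda>x y. if x = b \<and> y = d then 1 else 0)"

lemma kraus_Ebd:
  assumes fV: "finite V" and k: "is_kraus V G Ks" and a: "a \<in> asg V" and b: "b \<in> asg V"
    and c: "c \<in> asg V" and d: "d \<in> asg V"
  shows "G (Ebd b d) a c = (\<Sum>K\<leftarrow>Ks. K a b * cnj (K c d))"
proof -
  have "G (Ebd b d) a c = (\<Sum>K\<leftarrow>Ks. mmul V (mmul V K (Ebd b d)) (adj K) a c)"
    using k a c by (simp add: is_kraus_def)
  also have "\<dots> = (\<Sum>K\<leftarrow>Ks. K a b * cnj (K c d))"
  proof (rule arg_cong[where f = sum_list], rule map_cong[OF refl])
    fix K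
    have m1: "mmul V K (Ebd b d) a w = (if w = d then K a b else 0)" for w
    proof -
      have "mmul V K (Ebd b d) a w = (\<Sum>u\<in>asg V. if u = b then (if w = d then K a b else 0) else 0)"
        unfolding mmul_def Ebd_def by (intro sum.cong refl) auto
      also have "\<dots> = (if w = d then K a b else 0)" using b fV by (simp add: sum.delta' finite_asg)
      finally show ?thesis .
    qed
    have "mmul V (mmul V K (Ebd b d)) (adj K) a c = (\<Sum>w\<in>asg V. if w = d then K a b * cnj (K c d) else 0)"
      unfolding mmul_def[of V "mmul V K (Ebd b d)"] m1 adj_def by (intro sum.cong refl) auto
    also have "\<dots> = K a b * cnj (K c d)" using d fV by (simp add: sum.delta' finite_asg)
    finally show "mmul V (mmul V K (Ebd b d)) (adj K) a c = K a b * cnj (K c d)" .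
  qed
  finally show ?thesis .
qed

lemma kraus_inv:
  assumes fV: "finite V" and k: "is_kraus V G Ks"
  shows "(\<Sum>K\<leftarrow>Ks. frob V M K * cnj (frob V M K)) =
    (\<Sum>a\<in>asg V. \<Sum>c\<in>asg V. \<Sum>b\<in>asg V. \<Sum>d\<in>asg V. cnj (M a b) * M c d * G (Ebd b d) a c)"
proof -
  have e: "frob V M K * cnj (frob V M K) =
     (\<Sum>a\<in>asg V. \<Sum>c\<in>asg V. \<Sum>b\<in>asg V. \<Sum>d\<in>asg V. cnj (M a b) * M c d * (K a b * cnj (K c d)))" for K
  proof -
    have "frob V M K * cnj (frob V M K) = (\<Sum>a\<in>asg V. \<Sum>b\<in>asg V. cnj (M a b) * K a b) * (\<Sum>c\<in>asg V. \<Sum>d\<in>asg V. M c d * cnj (K c d))"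
      by (simp add: frob_def cnj_sum)
    also have "\<dots> = (\<Sum>a\<in>asg V. \<Sum>c\<in>asg V. (\<Sum>b\<in>asg V. cnj (M a b) * K a b) * (\<Sum>d\<in>asg V. M c d * cnj (K c d)))"
      by (rule sum_product)
    also have "\<dots> = (\<Sum>a\<in>asg V. \<Sum>c\<in>asg V. \<Sum>b\<in>asg V. \<Sum>d\<in>asg V. (cnj (M a b) * K a b) * (M c d * cnj (K c d)))"
      by (simp only: sum_product)
    finally show ?thesis by (simp add: mult_ac)
  qed
  have "(\<Sum>K\<leftarrow>Ks. frob V M K * cnj (frob V M K)) =
     (\<Sum>K\<leftarrow>Ks. \<Sum>a\<in>asg V. \<Sum>c\<in>asg V. \<Sum>b\<in>asg V. \<Sum>d\<in>asg V. cnj (M a b) * M c d * (K a b * cnj (K c d)))"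
    by (simp only: e)
  also have "\<dots> = (\<Sum>a\<in>asg V. \<Sum>c\<in>asg V. \<Sum>b\<in>asg V. \<Sum>d\<in>asg V. cnj (M a b) * M c d * (\<Sum>K\<leftarrow>Ks. K a b * cnj (K c d)))"
    by (simp only: sum_sum_list_swap[symmetric] sum_list_const_mult)
  also have "\<dots> = (\<Sum>a\<in>asg V. \<Sum>c\<in>asg V. \<Sum>b\<in>asg V. \<Sum>d\<in>asg V. cnj (M a b) * M c d * G (Ebd b d) a c)"
    by (intro sum.cong refl) (simp add: kraus_Ebd[OF fV k])
  finally show ?thesis .
qed

lemma kraus_span_sub:
  assumes fV: "finite V" and k1: "is_kraus V G K1" and k2: "is_kraus V G K2"
  shows "cspan (clip V ` set K2) \<subseteq> cspan (clip V ` set K1)"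
proof -
  have "clip V L \<in> cspan (clip V ` set K1)" if L: "L \<in> set K2" for L
  proof (rule ccontr)
    assume n: "clip V L \<notin> cspan (clip V ` set K1)"
    obtain M where M1: "\<forall>K\<in>set K1. frob V M K = 0" and M2: "frob V M L \<noteq> 0"
      using sep_mat[OF fV _ n] by blast
    have "(\<Sum>K\<leftarrow>K2. frob V M K * cnj (frob V M K)) = (\<Sum>K\<leftarrow>K1. frob V M K * cnj (frob V M K))"
      by (simp add: kraus_inv[OF fV k1] kraus_inv[OF fV k2])
    also have "\<dots> = 0" using M1 by (induction K1) auto
    finally have z: "(\<Sum>K\<leftarrow>K2. frob V M K * cnj (frob V M K)) = 0" .
    have "(\<Sum>K\<leftarrow>K2. (cmod (frob V M K))\<^sup>2) = Re (\<Sum>K\<leftarrow>K2. frob V M K * cnj (frob V M K))"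
      by (simp add: Re_sum_list complex_norm_square[symmetric] mult.commute)
    hence "(\<Sum>K\<leftarrow>K2. (cmod (frob V M K))\<^sup>2) \<le> 0" using z by simp
    hence "(cmod (frob V M L))\<^sup>2 \<le> 0" by (rule sum_list_nonneg_le0[rotated]) (use L in auto)
    thus False using M2 by simp
  qed
  hence "clip V ` set K2 \<subseteq> cspan (clip V ` set K1)" by auto
  thus ?thesis unfolding cspan_eq by (intro qv.span_minimal) auto
qed

lemma kraus_span_eq:
  assumes fV: "finite V" and k: "is_kraus V G Ks"
  shows "kraus_span V G = cspan (clip V ` set Ks)"
proof -
  have k0: "is_kraus V G (SOME Ks. is_kraus V G Ks)" using k by (rule someI)
  show ?thesis unfolding kraus_span_def
    using kraus_span_sub[OF fV k k0] kraus_span_sub[OF fV k0 k] by blast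
qed


lemma apply_cl_vec_in: "cl V P \<Longrightarrow> vec_in V (apply_op V P \<psi>)"
  by (auto simp: vec_in_def apply_op_def cl_def)

lemma fixed_unique:
  assumes fV: "finite V" and p1: "pj V P1" and p2: "pj V P2"
    and fx: "\<And>\<psi>. vec_in V \<psi> \<Longrightarrow> apply_op V P2 \<psi> = \<psi> \<Longrightarrow> apply_op V P1 \<psi> = \<psi>"
  shows "mmul V P1 P2 = P2"
proof -
  have "mmul V (P1 - Idm V) P2 = 0"
  proof (rule mat_from_vec[OF fV p2])
    show "cl V (P1 - Idm V)" using p1 by (simp add: pj_def)
    fix \<psi> s assume a: "apply_op V P2 \<psi> = \<psi>" and s: "s \<in> asg V"
    have "vec_in V \<psi>" using apply_cl_vec_in[of V P2 \<psi>] p2 a by (simp add: pj_def)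
    hence "apply_op V P1 \<psi> = \<psi>" using fx a by blast
    thus "apply_op V (P1 - Idm V) \<psi> s = 0" using s fV by (simp add: apply_diff apply_Idm)
  qed
  thus ?thesis using p1 p2 fV by (simp add: mmul_diff_left mmul_Idm_left pj_def)
qed

lemma proj_unique:
  assumes fV: "finite V" and p1: "pj V P1" and p2: "pj V P2"
    and fx: "\<And>\<psi>. vec_in V \<psi> \<Longrightarrow> apply_op V P1 \<psi> = \<psi> \<longleftrightarrow> apply_op V P2 \<psi> = \<psi>"
  shows "P1 = P2"
proof -
  have a: "mmul V P1 P2 = P2" using fixed_unique[OF fV p1 p2] fx by blast
  have b: "mmul V P2 P1 = P1" using fixed_unique[OF fV p2 p1] fx by blast
  have "P2 = adj (mmul V P1 P2)" using a p2 by (simp add: pj_def)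
  also have "\<dots> = mmul V P2 P1" using p1 p2 by (simp add: adj_mmul pj_def)
  finally show ?thesis using b by simp
qed

lemma vec_in_sup: "vec_in V \<psi> \<longleftrightarrow> supp_on (asg V) \<psi>"
  by (simp add: vec_in_def supp_on_def)

lemma term_proj_ok:
  assumes fV: "finite V" and k: "is_kraus V E Es" and t: "trace_nonincreasing V E"
  shows "pj V (term_proj V E)"
    and "\<And>\<psi>. vec_in V \<psi> \<Longrightarrow> apply_op V (term_proj V E) \<psi> = \<psi> \<longleftrightarrow> \<psi> \<in> term_space V E"
proof -
  define TE where "TE = term_space V E"
  define D where "D = Idm V - kmat V (map (clip V) Es)"
  have TEi: "\<psi> \<in> TE \<longleftrightarrow> vec_in V \<psi> \<and> (\<forall>s\<in>asg V. apply_op V D \<psi> s = 0)" for \<psi>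
    unfolding TE_def D_def by (rule term_space_iff[OF fV k t])
  have sub: "fv.subspace TE"
    unfolding fv.subspace_def
  proof (intro conjI ballI allI)
    show "0 \<in> TE" unfolding TEi by (simp add: vec_in_def apply_op_def)
    fix x y assume x: "x \<in> TE" and y: "y \<in> TE"
    show "x + y \<in> TE" using x y unfolding TEi by (simp add: vec_in_def apply_add)
  next
    fix c and x :: qvec assume x: "x \<in> TE"
    show "fsc c x \<in> TE" using x unfolding TEi fsc_def by (simp add: vec_in_def apply_scale)
  qed
  define e where "e = (\<lambda>s::asgn. \<lambda>u::asgn. if u = s then (1::complex) else 0)"
  have fBas: "finite (e ` asg V)" using fV by (simp add: finite_asg)
  have TEsp: "TE \<subseteq> fv.span (e ` asg V)"
  proof
    fix \<psi> assume "\<psi> \<in> TE"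
    hence vi: "vec_in V \<psi>" using TEi by blast
    have "\<psi> = (\<Sum>s\<in>asg V. fsc (\<psi> s) (e s))"
    proof (rule ext)
      fix u
      have "(\<Sum>s\<in>asg V. fsc (\<psi> s) (e s)) u = (\<Sum>s\<in>asg V. if u = s then \<psi> u else 0)"
        by (simp add: sum_apply_fun fsc_def e_def) (intro sum.cong refl, auto)
      also have "\<dots> = \<psi> u" using vi fV by (simp add: sum.delta finite_asg vec_in_def)
      finally show "\<psi> u = (\<Sum>s\<in>asg V. fsc (\<psi> s) (e s)) u" by simp
    qed
    also have "\<dots> \<in> fv.span (e ` asg V)"
      by (intro fv.span_sum fv.span_scale fv.span_base) auto
    finally show "\<psi> \<in> fv.span (e ` asg V)" .
  qed
  obtain B where B: "B \<subseteq> TE" "fv.independent B" "TE \<subseteq> fv.span B"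
    using fv.maximal_independent_subset by blast
  have fB: "finite B" using fv.independent_span_bound[OF fBas B(2)] B(1) TEsp by blast
  have spB: "fv.span B = TE" using B sub fv.span_minimal by blast
  have supB: "\<forall>v\<in>B. supp_on (asg V) v" using B(1) TEi vec_in_sup by blast
  obtain U where o: "onb (asg V) U" and spU: "fv.span U = fv.span B"
    using gram_schmidt[OF finite_asg[OF fV] fB supB] by blast
  define P0 where "P0 = clip V (\<lambda>s t. \<Sum>u\<in>U. u s * cnj (u t))"
  have app: "apply_op V P0 \<psi> = prj (asg V) U \<psi>" for \<psi>
  proof (rule ext)
    fix s
    show "apply_op V P0 \<psi> s = prj (asg V) U \<psi> s"
    proof (cases "s \<in> asg V")
      case True
      have "apply_op V P0 \<psi> s = (\<Sum>t\<in>asg V. \<Sum>u\<in>U. u s * cnj (u t) * \<psi> t)"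
        unfolding apply_op_def P0_def using True by (intro sum.cong refl) (auto simp: clip_def sum_distrib_right)
      also have "\<dots> = (\<Sum>u\<in>U. \<Sum>t\<in>asg V. u s * cnj (u t) * \<psi> t)" by (rule sum.swap)
      also have "\<dots> = prj (asg V) U \<psi> s"
        by (simp add: prj_def gip_def sum_distrib_left sum_distrib_right mult_ac)
      finally show ?thesis .
    next
      case False
      thus ?thesis using o by (auto simp: apply_op_def P0_def clip_def prj_def onb_def supp_on_def intro!: sum.neutral)
    qed
  qed
  have col: "(\<lambda>w. P0 w t) = prj (asg V) U (e t)" if t: "t \<in> asg V" for t
  proof -
    have "apply_op V P0 (e t) w = P0 w t" for w
    proof -
      have "apply_op V P0 (e t) w = (\<Sum>ta\<in>asg V. if ta = t then P0 w t else 0)"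
        unfolding apply_op_def e_def by (intro sum.cong refl) auto
      thus ?thesis using t fV by (simp add: sum.delta' finite_asg)
    qed
    hence "apply_op V P0 (e t) = (\<lambda>w. P0 w t)" by (rule ext)
    thus ?thesis using app by simp
  qed
  have pj0: "pj V P0"
  proof -
    have cl0: "cl V P0" by (simp add: P0_def)
    have mm: "mmul V P0 P0 = P0"
    proof (rule ext, rule ext)
      fix s t
      show "mmul V P0 P0 s t = P0 s t"
      proof (cases "t \<in> asg V")
        case True
        have "mmul V P0 P0 s t = apply_op V P0 (\<lambda>w. P0 w t) s" by (simp add: mmul_def apply_op_def)
        also have "\<dots> = prj (asg V) U (prj (asg V) U (e t)) s" using col[OF True] app by simp
        also have "\<dots> = prj (asg V) U (e t) s" using prj_idem[OF o] by simp
        also have "\<dots> = P0 s t" using col[OF True] by (metis)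
        finally show ?thesis .
      next
        case False thus ?thesis using cl0 by (auto simp: mmul_def cl_def)
      qed
    qed
    have ad: "adj P0 = P0" by (auto simp: adj_def P0_def clip_def fun_eq_iff mult.commute)
    show ?thesis using cl0 mm ad by (simp add: pj_def)
  qed
  have fix0: "apply_op V P0 \<psi> = \<psi> \<longleftrightarrow> \<psi> \<in> TE" if vi: "vec_in V \<psi>" for \<psi>
  proof
    assume "apply_op V P0 \<psi> = \<psi>"
    hence "\<psi> \<in> fv.span U" using app prj_in_span by metis
    thus "\<psi> \<in> TE" using spU spB by simp
  next
    assume "\<psi> \<in> TE"
    hence "\<psi> \<in> fv.span U" using spU spB by simp
    thus "apply_op V P0 \<psi> = \<psi>" using app prj_fix_span[OF o] by simp
  qed
  have P0prop: "P0 = clip V P0 \<and> projector V P0 \<and> {\<psi>. vec_in V \<psi> \<and> apply_op V P0 \<psi> = \<psi>} = term_space V E"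
    using pj0 fix0 TEi unfolding TE_def
    by (auto simp: pj_def projector_def clip_cl adj_def fun_eq_iff dest: fun_cong)
  have "term_proj V E = P0"
    unfolding term_proj_def
  proof (rule the_equality)
    show "P0 = clip V P0 \<and> projector V P0 \<and> {\<psi>. vec_in V \<psi> \<and> apply_op V P0 \<psi> = \<psi>} = term_space V E"
      by (rule P0prop)
    fix P assume a: "P = clip V P \<and> projector V P \<and> {\<psi>. vec_in V \<psi> \<and> apply_op V P \<psi> = \<psi>} = term_space V E"
    have pjP: "pj V P" using a projector_pj[of V P] by metis
    show "P = P0"
    proof (rule proj_unique[OF fV pjP pj0])
      fix \<psi> assume vi: "vec_in V \<psi>"
      have "apply_op V P \<psi> = \<psi> \<longleftrightarrow> \<psi> \<in> term_space V E" using a vi by blast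
      thus "apply_op V P \<psi> = \<psi> \<longleftrightarrow> apply_op V P0 \<psi> = \<psi>" using fix0[OF vi] by (simp add: TE_def)
    qed
  qed
  thus "pj V (term_proj V E)" using pj0 by simp
  show "\<And>\<psi>. vec_in V \<psi> \<Longrightarrow> apply_op V (term_proj V E) \<psi> = \<psi> \<longleftrightarrow> \<psi> \<in> term_space V E"
    using fix0 \<open>term_proj V E = P0\<close> by (simp add: TE_def)
qed


definition nn :: "nat set \<Rightarrow> nat" where "nn V = Suc (Max (insert 0 V))"
definition WW :: "nat set \<Rightarrow> nat set" where "WW V = V \<union> (\<lambda>q. q + nn V) ` V"
definition cp :: "nat set \<Rightarrow> asgn \<Rightarrow> asgn" where "cp V s = (\<lambda>q. q \<in> V \<and> s (q + nn V))"
definition jn :: "nat set \<Rightarrow> asgn \<Rightarrow> asgn \<Rightarrow> asgn" where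
  "jn V a b = (\<lambda>q. if q \<in> V then a q else (nn V \<le> q \<and> b (q - nn V)))"
definition vecop :: "nat set \<Rightarrow> qop \<Rightarrow> qvec" where
  "vecop V B = (\<lambda>s. if s \<in> asg (WW V) then B (restr V s) (cp V s) else 0)"

lemma lt_nn: "finite V \<Longrightarrow> q \<in> V \<Longrightarrow> q < nn V"
  unfolding nn_def by (simp add: le_imp_less_Suc)

lemma finite_WW: "finite V \<Longrightarrow> finite (WW V)" by (simp add: WW_def)
lemma sub_WW: "V \<subseteq> WW V" by (simp add: WW_def)

lemma cp_asg[simp]: "cp V s \<in> asg V" by (auto simp: cp_def asg_def)

lemma jn_asg: "finite V \<Longrightarrow> b \<in> asg V \<Longrightarrow> jn V a b \<in> asg (WW V)"
proof -
  assume f: "finite V" and b: "b \<in> asg V"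
  show ?thesis unfolding asg_def
  proof (intro CollectI allI impI)
    fix q assume q: "q \<notin> WW V"
    hence qV: "q \<notin> V" by (simp add: WW_def)
    have "\<not> (nn V \<le> q \<and> b (q - nn V))"
    proof
      assume a: "nn V \<le> q \<and> b (q - nn V)"
      hence "q - nn V \<in> V" using b by (auto simp: asg_def)
      moreover have "q = (q - nn V) + nn V" using a by simp
      ultimately have "q \<in> WW V" unfolding WW_def by blast
      thus False using q by simp
    qed
    thus "\<not> jn V a b q" using qV by (simp add: jn_def)
  qed
qed

lemma restr_jn: "a \<in> asg V \<Longrightarrow> restr V (jn V a b) = a"
  by (auto simp: restr_def jn_def asg_def fun_eq_iff)

lemma cp_jn: "finite V \<Longrightarrow> b \<in> asg V \<Longrightarrow> cp V (jn V a b) = b"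
proof -
  assume f: "finite V" and b: "b \<in> asg V"
  show ?thesis
  proof (rule ext)
    fix q
    show "cp V (jn V a b) q = b q"
    proof (cases "q \<in> V")
      case True
      have "q + nn V \<notin> V" using lt_nn[OF f] by (metis add_lessD1 less_irrefl_nat add.commute)
      thus ?thesis using True by (simp add: cp_def jn_def)
    next
      case False thus ?thesis using b by (auto simp: cp_def asg_def)
    qed
  qed
qed

lemma jn_restr_cp: "finite V \<Longrightarrow> s \<in> asg (WW V) \<Longrightarrow> jn V (restr V s) (cp V s) = s"
proof -
  assume f: "finite V" and s: "s \<in> asg (WW V)"
  show ?thesis
  proof (rule ext)
    fix q
    show "jn V (restr V s) (cp V s) q = s q"
    proof (cases "q \<in> V")
      case True thus ?thesis by (simp add: jn_def restr_def)
    next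
      case False
      show ?thesis
      proof (cases "s q")
        case True
        hence "q \<in> WW V" using s by (auto simp: asg_def)
        then obtain q' where q': "q' \<in> V" "q = q' + nn V" using False by (auto simp: WW_def)
        thus ?thesis using False True by (simp add: jn_def cp_def)
      next
        case sF: False
        thus ?thesis using False by (auto simp: jn_def cp_def)
      qed
    qed
  qed
qed

lemma bij_pair: "finite V \<Longrightarrow> bij_betw (\<lambda>s. (restr V s, cp V s)) (asg (WW V)) (asg V \<times> asg V)"
proof -
  assume f: "finite V"
  show ?thesis
  proof (rule bij_betwI[where g = "\<lambda>(a,b). jn V a b"])
    show "(\<lambda>s. (restr V s, cp V s)) \<in> asg (WW V) \<rightarrow> asg V \<times> asg V" by simp
    show "(\<lambda>(a, b). jn V a b) \<in> asg V \<times> asg V \<rightarrow> asg (WW V)" using f by (auto simp: jn_asg)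
    show "\<And>x. x \<in> asg (WW V) \<Longrightarrow> (case (restr V x, cp V x) of (a, b) \<Rightarrow> jn V a b) = x"
      using f by (simp add: jn_restr_cp)
    show "\<And>y. y \<in> asg V \<times> asg V \<Longrightarrow> (restr V (case y of (a, b) \<Rightarrow> jn V a b), cp V (case y of (a, b) \<Rightarrow> jn V a b)) = y"
      using f by (auto simp: restr_jn cp_jn)
  qed
qed

lemma vecop_ip: "finite V \<Longrightarrow> ip (WW V) (vecop V M) (vecop V B) = frob V M B"
proof -
  assume f: "finite V"
  have "ip (WW V) (vecop V M) (vecop V B) = (\<Sum>s\<in>asg (WW V). (\<lambda>(a,b). cnj (M a b) * B a b) (restr V s, cp V s))"
    by (simp add: ip_def vecop_def)
  also have "\<dots> = (\<Sum>p\<in>asg V \<times> asg V. (\<lambda>(a,b). cnj (M a b) * B a b) p)"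
    by (rule sum.reindex_bij_betw[OF bij_pair[OF f]])
  also have "\<dots> = frob V M B" by (simp add: frob_def sum.cartesian_product)
  finally show ?thesis .
qed

lemma vecop_at_jn: "finite V \<Longrightarrow> a \<in> asg V \<Longrightarrow> b \<in> asg V \<Longrightarrow> vecop V B (jn V a b) = B a b"
  by (simp add: vecop_def jn_asg restr_jn cp_jn)

lemma cp_merge: "finite V \<Longrightarrow> cp V (merge V a s) = cp V s"
proof -
  assume f: "finite V"
  have "q + nn V \<notin> V" if "q \<in> V" for q using lt_nn[OF f that] lt_nn[OF f] by (metis add_lessD1 less_irrefl_nat add.commute)
  thus ?thesis by (auto simp: cp_def merge_def fun_eq_iff)
qed

lemma vecop_apply_ex: "finite V \<Longrightarrow> apply_op (WW V) (ex V (WW V) A) (vecop V B) = vecop V (mmul V A B)"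
proof (rule ext)
  fix s assume f: "finite V"
  show "apply_op (WW V) (ex V (WW V) A) (vecop V B) s = vecop V (mmul V A B) s"
  proof (cases "s \<in> asg (WW V)")
    case True
    have "apply_op (WW V) (ex V (WW V) A) (vecop V B) s = apply_op V A (\<lambda>a. vecop V B (merge V a s)) (restr V s)"
      by (rule apply_ex_slice[OF finite_WW[OF f] sub_WW True])
    also have "\<dots> = (\<Sum>a\<in>asg V. A (restr V s) a * B a (cp V s))"
      unfolding apply_op_def using True f
      by (intro sum.cong refl) (simp add: vecop_def merge_asg[OF sub_WW] cp_merge)
    also have "\<dots> = vecop V (mmul V A B) s" using True by (simp add: vecop_def mmul_def)
    finally show ?thesis .
  next
    case False thus ?thesis by (simp add: apply_op_def vecop_def ex_def clip_def)
  qed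
qed

lemma vecop_vec_in: "vec_in (WW V) (vecop V B)"
  by (simp add: vec_in_def vecop_def)

definition rank1 :: "nat set \<Rightarrow> qvec \<Rightarrow> qop" where
  "rank1 X v = (\<lambda>s u. v s * cnj (v u) / complex_of_real (Re (ip X v v)))"

lemma ip_self_of_real: "ip X v v = complex_of_real (Re (ip X v v))"
  by (simp add: complex_eq_iff)

lemma pj_rank1:
  assumes f: "finite X" and vi: "vec_in X v" and n: "0 < Re (ip X v v)"
  shows "pj X (rank1 X v)"
proof -
  define nv where "nv = Re (ip X v v)"
  have cl: "cl X (rank1 X v)" using vi by (auto simp: cl_def rank1_def vec_in_def)
  have mm: "mmul X (rank1 X v) (rank1 X v) = rank1 X v"
  proof (rule ext, rule ext)
    fix s u
    have "mmul X (rank1 X v) (rank1 X v) s u = v s * cnj (v u) * ip X v v / (complex_of_real nv * complex_of_real nv)"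
      by (simp add: mmul_def rank1_def ip_def sum_distrib_left sum_distrib_right sum_divide_distrib nv_def mult_ac)
    also have "\<dots> = rank1 X v s u"
      using n by (subst ip_self_of_real) (simp add: rank1_def nv_def field_simps)
    finally show "mmul X (rank1 X v) (rank1 X v) s u = rank1 X v s u" .
  qed
  have ad: "adj (rank1 X v) = rank1 X v"
    by (auto simp: adj_def rank1_def fun_eq_iff mult.commute)
  show ?thesis using cl mm ad by (simp add: pj_def)
qed

lemma pj_projector: "pj X P \<Longrightarrow> projector X P"
  by (simp add: pj_def projector_def)

lemma mmul_rank1_right: "mmul X A (rank1 X v) = (\<lambda>s u. apply_op X A v s * cnj (v u) / complex_of_real (Re (ip X v v)))"
  by (simp add: fun_eq_iff mmul_def rank1_def apply_op_def sum_distrib_right sum_distrib_left sum_divide_distrib mult_ac times_divide_eq_right)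

lemma mmul_rank1_left: "mmul X (rank1 X m) Y = (\<lambda>s u. m s * ip X m (\<lambda>w. Y w u) / complex_of_real (Re (ip X m m)))"
  by (simp add: fun_eq_iff mmul_def rank1_def ip_def sum_distrib_left sum_divide_distrib mult_ac)

lemma exists_nonzero: "finite X \<Longrightarrow> 0 < Re (ip X v v) \<Longrightarrow> \<exists>s\<in>asg X. v s \<noteq> 0"
proof (rule ccontr)
  assume "\<not> (\<exists>s\<in>asg X. v s \<noteq> 0)" and "0 < Re (ip X v v)"
  hence "ip X v v = 0" by (simp add: ip_def)
  thus False using \<open>0 < Re (ip X v v)\<close> by simp
qed


lemma ip_scale_right': "ip X x (\<lambda>w. y w * c) = ip X x y * c"
  by (simp add: ip_def sum_distrib_right sum_distrib_left mult_ac)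

lemma vecop_zero_fun: "vecop V (\<lambda>a b. 0) = (\<lambda>s. 0)"
  by (simp add: vecop_def fun_eq_iff)

lemma test_construct:
  assumes fV: "finite V" and pT: "pj V T" and nz: "frob V M (mmul V L0 T) \<noteq> 0"
  shows "\<exists>W P Q. finite W \<and> V \<subseteq> W \<and> pj W P \<and> pj W Q \<and>
     (\<forall>K. mmul W (Idm W - Q) (mmul W (ex V W K) P) = 0 \<longleftrightarrow> frob V M (mmul V K T) = 0) \<and>
     (\<forall>D. mmul V D T = 0 \<longrightarrow> mmul W (ex V W D) P = 0)"
proof -
  define W where "W = WW V"
  define t where "t = vecop V T"
  define m where "m = vecop V M"
  define nt where "nt = Re (ip W t t)"
  define nm where "nm = Re (ip W m m)"
  have fW: "finite W" using fV by (simp add: W_def finite_WW)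
  have VW: "V \<subseteq> W" by (simp add: W_def sub_WW)
  have nt: "0 < nt"
  proof (rule ccontr)
    assume "\<not> 0 < nt"
    hence z: "t s = 0" if "s \<in> asg W" for s using ip_self_zero[OF fW _ that] by (simp add: nt_def)
    have "T a b = 0" if "a \<in> asg V" "b \<in> asg V" for a b
      using z[of "jn V a b"] vecop_at_jn[OF fV that] jn_asg[OF fV that(2)] by (simp add: t_def W_def)
    hence "frob V M (mmul V L0 T) = 0" by (simp add: frob_def mmul_def)
    thus False using nz by simp
  qed
  have nm: "0 < nm"
  proof (rule ccontr)
    assume "\<not> 0 < nm"
    hence z: "m s = 0" if "s \<in> asg W" for s using ip_self_zero[OF fW _ that] by (simp add: nm_def)
    have "M a b = 0" if "a \<in> asg V" "b \<in> asg V" for a b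
      using z[of "jn V a b"] vecop_at_jn[OF fV that] jn_asg[OF fV that(2)] by (simp add: m_def W_def)
    hence "frob V M (mmul V L0 T) = 0" by (simp add: frob_def)
    thus False using nz by simp
  qed
  define P where "P = rank1 W t"
  define Q where "Q = Idm W - rank1 W m"
  have pP: "pj W P" unfolding P_def
    by (rule pj_rank1[OF fW]) (use nt in \<open>simp_all add: t_def W_def vecop_vec_in nt_def\<close>)
  have pR: "pj W (rank1 W m)"
    by (rule pj_rank1[OF fW]) (use nm in \<open>simp_all add: m_def W_def vecop_vec_in nm_def\<close>)
  have pQ: "pj W Q" unfolding Q_def by (rule pj_compl[OF fW pR])
  have IQ: "Idm W - Q = rank1 W m" by (simp add: Q_def)
  have KP: "mmul W (ex V W K) P = (\<lambda>s u. vecop V (mmul V K T) s * cnj (t u) / complex_of_real nt)" for K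
    unfolding P_def mmul_rank1_right using vecop_apply_ex[OF fV, of K T]
    by (simp add: W_def t_def nt_def)
  have form: "mmul W (Idm W - Q) (mmul W (ex V W K) P) =
     (\<lambda>s u. m s * (frob V M (mmul V K T) * (cnj (t u) / complex_of_real nt)) / complex_of_real nm)" for K
  proof -
    have "mmul W (Idm W - Q) (mmul W (ex V W K) P) =
       (\<lambda>s u. m s * ip W m (\<lambda>w. vecop V (mmul V K T) w * (cnj (t u) / complex_of_real nt)) / complex_of_real nm)"
      unfolding IQ mmul_rank1_left KP by (simp add: nm_def)
    also have "\<dots> = (\<lambda>s u. m s * (frob V M (mmul V K T) * (cnj (t u) / complex_of_real nt)) / complex_of_real nm)"
      by (simp only: ip_scale_right' m_def W_def vecop_ip[OF fV])
    finally show ?thesis .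
  qed
  obtain s0 where s0: "s0 \<in> asg W" "m s0 \<noteq> 0" using exists_nonzero[OF fW, of m] nm by (auto simp: nm_def)
  obtain u0 where u0: "u0 \<in> asg W" "t u0 \<noteq> 0" using exists_nonzero[OF fW, of t] nt by (auto simp: nt_def)
  have b: "mmul W (Idm W - Q) (mmul W (ex V W K) P) = 0 \<longleftrightarrow> frob V M (mmul V K T) = 0" for K
  proof
    assume "mmul W (Idm W - Q) (mmul W (ex V W K) P) = 0"
    hence "mmul W (Idm W - Q) (mmul W (ex V W K) P) s0 u0 = 0" by simp
    thus "frob V M (mmul V K T) = 0" unfolding form using s0 u0 nt nm by simp
  next
    assume "frob V M (mmul V K T) = 0"
    thus "mmul W (Idm W - Q) (mmul W (ex V W K) P) = 0" unfolding form by (simp add: fun_eq_iff)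
  qed
  have c: "mmul V D T = 0 \<longrightarrow> mmul W (ex V W D) P = 0" for D
    unfolding KP by (auto simp: fun_eq_iff vecop_def)
  show ?thesis using fW VW pP pQ b c by blast
qed


lemma sat_par_ex: "sat_par V W G P Q \<longleftrightarrow> (\<forall>X. finite X \<longrightarrow> V \<union> W \<subseteq> X \<longrightarrow> (\<forall>\<rho>. density X \<rho> \<longrightarrow>
     Re (qtrace X (mmul X (ex W X P) \<rho>))
       \<le> Re (qtrace X (mmul X (ex W X Q) (ext_so V G \<rho>)))
          + Re (qtrace X \<rho>) - Re (qtrace X (ext_so V G \<rho>))))"
  by (simp add: sat_par_def ex_def qtrace_mmul_clip_left)

lemma sat_tot_ex: "sat_tot V W G P Q \<longleftrightarrow> (\<forall>X. finite X \<longrightarrow> V \<union> W \<subseteq> X \<longrightarrow> (\<forall>\<rho>. density X \<rho> \<longrightarrow>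
     Re (qtrace X (mmul X (ex W X P) \<rho>))
       \<le> Re (qtrace X (mmul X (ex W X Q) (ext_so V G \<rho>)))))"
  by (simp add: sat_tot_def ex_def qtrace_mmul_clip_left)

lemma density_pos: "density X \<rho> \<Longrightarrow> positive X \<rho>" by (simp add: density_def)

lemma lift_cond:
  assumes f: "finite X" and VW: "V \<subseteq> W" and WX: "W \<subseteq> X"
  shows "mmul X (Idm X - ex W X Q) (mmul X (ex V X K) (ex W X P)) =
         ex W X (mmul W (Idm W - Q) (mmul W (ex V W K) P))"
proof -
  have "ex V X K = ex W X (ex V W K)" using ex_trans[OF VW WX] by simp
  moreover have "Idm X - ex W X Q = ex W X (Idm W - Q)" using ex_Idm[OF f WX] by (simp add: ex_diff)
  ultimately show ?thesis using f WX by (simp add: ex_mmul)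
qed

definition DV :: "nat set \<Rightarrow> qop list \<Rightarrow> qop" where
  "DV V Es = Idm V - kmat V (map (clip V) Es)"

lemma adj_clip: "adj (clip V K) = clip V (adj K)"
  by (auto simp: adj_def clip_def fun_eq_iff)

lemma DX:
  assumes f: "finite X" and VX: "V \<subseteq> X"
  shows "Idm X - kmat X (map (ex V X) Es) = ex V X (DV V Es)"
proof -
  have "ex V X (kmat V (map (clip V) Es)) = kmat X (map (ex V X) Es)"
    unfolding kmat_def ex_sum_list map_map o_def
    using f VX by (simp add: ex_mmul[symmetric] ex_adj adj_clip ex_clip)
  thus ?thesis using ex_Idm[OF f VX] by (simp add: DV_def ex_diff)
qed

lemma mmul_scale_left: "mmul X (\<lambda>s t. c * Y s t) Z = (\<lambda>s t. c * mmul X Y Z s t)"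
  by (simp add: fun_eq_iff mmul_def sum_distrib_left mult_ac)
lemma mmul_scale_right: "mmul X Y (\<lambda>s t. c * Z s t) = (\<lambda>s t. c * mmul X Y Z s t)"
  by (simp add: fun_eq_iff mmul_def sum_distrib_left mult_ac)

lemma Z_subspace: "qv.subspace {N. mmul X C (mmul X (ex V X N) A) = 0}"
  unfolding qv.subspace_def
  by (auto simp: ex_zero ex_add mmul_add_left mmul_add_right qsc_def ex_scale mmul_scale_left
      mmul_scale_right fun_eq_iff)

lemma Z_span:
  assumes "S \<subseteq> {N. mmul X C (mmul X (ex V X N) A) = 0}" "N \<in> cspan S"
  shows "mmul X C (mmul X (ex V X N) A) = 0"
  using qv.span_minimal[OF assms(1) Z_subspace] assms(2) unfolding cspan_eq by blast

lemma kraus_comp: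
  assumes k: "is_kraus V E Es" and pT: "pj V T"
  shows "is_kraus V (E \<circ> proj_so V T) (map (\<lambda>K. mmul V K T) Es)"
  unfolding is_kraus_def
proof (intro allI ballI)
  fix A s t assume s: "s \<in> asg V" and t: "t \<in> asg V"
  have "(E \<circ> proj_so V T) A s t = (\<Sum>K\<leftarrow>Es. mmul V (mmul V K (mmul V (mmul V T A) T)) (adj K) s t)"
    using k s t by (simp add: is_kraus_def proj_so_def)
  also have "\<dots> = (\<Sum>K\<leftarrow>map (\<lambda>K. mmul V K T) Es. mmul V (mmul V K A) (adj K) s t)"
    using pT by (simp add: o_def adj_mmul mmul_assoc pj_def)
  finally show "(E \<circ> proj_so V T) A s t = (\<Sum>K\<leftarrow>map (\<lambda>K. mmul V K T) Es. mmul V (mmul V K A) (adj K) s t)" .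
qed

lemma mmul_Idm_right_at: "finite V \<Longrightarrow> b \<in> asg V \<Longrightarrow> mmul V K (Idm V) a b = K a b"
proof -
  assume f: "finite V" and b: "b \<in> asg V"
  have "mmul V K (Idm V) a b = (\<Sum>u\<in>asg V. if u = b then K a b else 0)"
    unfolding mmul_def Idm_def clip_def using b by (intro sum.cong refl) auto
  thus ?thesis using b f by (simp add: sum.delta' finite_asg)
qed

lemma frob_Idm: "finite V \<Longrightarrow> frob V M (mmul V K (Idm V)) = frob V M K"
  by (simp add: frob_def mmul_Idm_right_at)

lemma clip_mmul_Idm: "finite V \<Longrightarrow> clip V (mmul V K (Idm V)) = clip V K"
  by (auto simp: fun_eq_iff clip_def mmul_Idm_right_at)

lemma DT_zero:
  assumes fV: "finite V" and pT: "pj V T"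
    and h: "\<And>\<psi>. vec_in V \<psi> \<Longrightarrow> apply_op V T \<psi> = \<psi> \<Longrightarrow> \<forall>s\<in>asg V. apply_op V D \<psi> s = 0"
    and cD: "cl V D"
  shows "mmul V D T = 0"
proof (rule mat_from_vec[OF fV pT cD])
  fix \<psi> s assume a: "apply_op V T \<psi> = \<psi>" and s: "s \<in> asg V"
  have "vec_in V \<psi>" using apply_cl_vec_in[of V T \<psi>] pT a by (simp add: pj_def)
  thus "apply_op V D \<psi> s = 0" using h a s by blast
qed

lemma cl_DV: "cl V (DV V Es)"
  by (simp add: DV_def kmat_def)

lemma slice_fix:
  assumes f: "finite X" and VX: "V \<subseteq> X" and pT: "pj V T" and pA: "pj X A"
    and h: "\<And>\<psi>. vec_in V \<psi> \<Longrightarrow> (\<forall>s\<in>asg V. apply_op V D \<psi> s = 0) \<Longrightarrow> apply_op V T \<psi> = \<psi>"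
    and z: "mmul X (ex V X D) A = 0"
  shows "mmul X (ex V X T) A = A"
proof -
  have "mmul X (ex V X T - Idm X) A = 0"
  proof (rule mat_from_vec[OF f pA])
    show "cl X (ex V X T - Idm X)" by simp
    fix \<psi> s assume a: "apply_op X A \<psi> = \<psi>" and s: "s \<in> asg X"
    have zz: "apply_op X (ex V X D) \<psi> s' = 0" for s'
    proof -
      have "apply_op X (ex V X D) \<psi> = apply_op X (mmul X (ex V X D) A) \<psi>" using a by (simp add: apply_mmul)
      thus ?thesis using z by (simp add: apply_op_def)
    qed
    define \<phi> where "\<phi> = (\<lambda>a. if a \<in> asg V then \<psi> (merge V a s) else 0)"
    have vi: "vec_in V \<phi>" by (simp add: vec_in_def \<phi>_def)
    have ap: "apply_op V N \<phi> = apply_op V N (\<lambda>a. \<psi> (merge V a s))" for N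
      by (simp add: apply_op_def \<phi>_def)
    have "\<forall>a\<in>asg V. apply_op V D \<phi> a = 0"
    proof
      fix a assume aV: "a \<in> asg V"
      have ms: "merge V a s \<in> asg X" by (rule merge_asg[OF VX aV s])
      have "apply_op X (ex V X D) \<psi> (merge V a s) = apply_op V D (\<lambda>b. \<psi> (merge V b (merge V a s))) (restr V (merge V a s))"
        by (rule apply_ex_slice[OF f VX ms])
      thus "apply_op V D \<phi> a = 0" using zz aV by (simp add: ap)
    qed
    hence fx: "apply_op V T \<phi> = \<phi>" using h vi by blast
    have "apply_op X (ex V X T) \<psi> s = apply_op V T (\<lambda>a. \<psi> (merge V a s)) (restr V s)"
      by (rule apply_ex_slice[OF f VX s])
    also have "\<dots> = \<phi> (restr V s)" using fx ap by metis
    also have "\<dots> = \<psi> s" by (simp add: \<phi>_def)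
    finally show "apply_op X (ex V X T - Idm X) \<psi> s = 0" using s f by (simp add: apply_diff apply_Idm)
  qed
  thus ?thesis using pA f by (simp add: mmul_diff_left mmul_Idm_left pj_def)
qed


lemma dir1a:
  assumes fV: "finite V" and kE: "is_kraus V E Es" and tE: "trace_nonincreasing V E"
    and kF: "is_kraus V F Fs" and tF: "trace_nonincreasing V F"
    and sp: "cspan (clip V ` set Fs) \<subseteq> cspan (clip V ` set Es)"
  shows "le_P V E F"
  unfolding le_P_def
proof (intro allI impI)
  fix W P Q assume fW: "finite W" and pP: "projector W P" and pQ: "projector W Q"
    and sE: "sat_par V W E P Q"
  show "sat_par V W F P Q" unfolding sat_par_ex
  proof (intro allI impI)
    fix X \<rho> assume fX: "finite X" and VWX: "V \<union> W \<subseteq> X" and d: "density X \<rho>"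
    have VX: "V \<subseteq> X" and WX: "W \<subseteq> X" using VWX by auto
    define A where "A = ex W X P"
    define B where "B = ex W X Q"
    have pA: "pj X A" unfolding A_def by (rule projector_ex[OF fX WX pP])
    have pB: "pj X B" unfolding B_def by (rule projector_ex[OF fX WX pQ])
    have kEX: "kraus_cl X (ext_so V E) (map (ex V X) Es)" by (rule kraus_ext[OF fX VX kE])
    have kFX: "kraus_cl X (ext_so V F) (map (ex V X) Fs)" by (rule kraus_ext[OF fX VX kF])
    have tFX: "tn X (ext_so V F)" by (rule tn_ext[OF fX VX kF tF])
    have HE: "\<forall>\<rho>. density X \<rho> \<longrightarrow> Re (qtrace X (mmul X A \<rho>))
              \<le> Re (qtrace X (mmul X B (ext_so V E \<rho>))) + Re (qtrace X \<rho>) - Re (qtrace X (ext_so V E \<rho>))"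
      using sE fX VWX unfolding sat_par_ex A_def B_def by blast
    have cE: "mmul X (Idm X - B) (mmul X (ex V X K) A) = 0" if "K \<in> set Es" for K
      using par_nec[OF fX kEX pA pB HE] that by simp
    have Zs: "clip V ` set Es \<subseteq> {N. mmul X (Idm X - B) (mmul X (ex V X N) A) = 0}"
      using cE by (auto simp: ex_clip)
    have cF: "\<forall>K\<in>set (map (ex V X) Fs). mmul X (Idm X - B) (mmul X K A) = 0"
    proof
      fix K assume "K \<in> set (map (ex V X) Fs)"
      then obtain L where L: "L \<in> set Fs" "K = ex V X L" by auto
      have "clip V L \<in> cspan (clip V ` set Es)"
        using sp L(1) qv.span_superset[of "clip V ` set Fs"] unfolding cspan_eq by blast
      hence "mmul X (Idm X - B) (mmul X (ex V X (clip V L)) A) = 0" by (rule Z_span[OF Zs])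
      thus "mmul X (Idm X - B) (mmul X K A) = 0" using L by (simp add: ex_clip)
    qed
    have "Re (qtrace X (mmul X A \<rho>))
              \<le> Re (qtrace X (mmul X B (ext_so V F \<rho>))) + Re (qtrace X \<rho>) - Re (qtrace X (ext_so V F \<rho>))"
      by (rule par_suff[OF fX kFX tFX pA pB cF density_pos[OF d]])
    thus "Re (qtrace X (mmul X (ex W X P) \<rho>))
       \<le> Re (qtrace X (mmul X (ex W X Q) (ext_so V F \<rho>))) + Re (qtrace X \<rho>) - Re (qtrace X (ext_so V F \<rho>))"
      by (simp add: A_def B_def)
  qed
qed

lemma ex_same_pj: "pj W P \<Longrightarrow> ex W W P = P"
  by (simp add: ex_same pj_def clip_cl)

lemma map_ex_same: "map (ex V V) Fs = map (clip V) Fs"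
  by (simp add: ex_same)

lemma dir1b:
  assumes fV: "finite V" and kE: "is_kraus V E Es" and tE: "trace_nonincreasing V E"
    and kF: "is_kraus V F Fs" and tF: "trace_nonincreasing V F"
    and le: "le_P V E F"
  shows "cspan (clip V ` set Fs) \<subseteq> cspan (clip V ` set Es)"
proof -
  have "clip V L \<in> cspan (clip V ` set Es)" if L: "L \<in> set Fs" for L
  proof (rule ccontr)
    assume n: "clip V L \<notin> cspan (clip V ` set Es)"
    obtain M where M1: "\<forall>K\<in>set Es. frob V M K = 0" and M2: "frob V M L \<noteq> 0"
      using sep_mat[OF fV _ n] by blast
    have M2': "frob V M (mmul V L (Idm V)) \<noteq> 0" using M2 frob_Idm[OF fV] by simp
    obtain W P Q where fW: "finite W" and VW: "V \<subseteq> W" and pP: "pj W P" and pQ: "pj W Q"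
      and tb: "\<forall>K. mmul W (Idm W - Q) (mmul W (ex V W K) P) = 0 \<longleftrightarrow> frob V M (mmul V K (Idm V)) = 0"
      using test_construct[OF fV pj_Idm[OF fV] M2'] by blast
    have sE: "sat_par V W E P Q" unfolding sat_par_ex
    proof (intro allI impI)
      fix X \<rho> assume fX: "finite X" and VWX: "V \<union> W \<subseteq> X" and d: "density X \<rho>"
      have VX: "V \<subseteq> X" and WX: "W \<subseteq> X" using VWX by auto
      have kEX: "kraus_cl X (ext_so V E) (map (ex V X) Es)" by (rule kraus_ext[OF fX VX kE])
      have tEX: "tn X (ext_so V E)" by (rule tn_ext[OF fX VX kE tE])
      have c: "\<forall>K\<in>set (map (ex V X) Es). mmul X (Idm X - ex W X Q) (mmul X K (ex W X P)) = 0"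
      proof
        fix K' assume "K' \<in> set (map (ex V X) Es)"
        then obtain K where K: "K \<in> set Es" "K' = ex V X K" by auto
        have "mmul W (Idm W - Q) (mmul W (ex V W K) P) = 0" using M1 K tb frob_Idm[OF fV] by simp
        thus "mmul X (Idm X - ex W X Q) (mmul X K' (ex W X P)) = 0"
          using K by (simp add: lift_cond[OF fX VW WX] ex_zero)
      qed
      show "Re (qtrace X (mmul X (ex W X P) \<rho>))
         \<le> Re (qtrace X (mmul X (ex W X Q) (ext_so V E \<rho>))) + Re (qtrace X \<rho>) - Re (qtrace X (ext_so V E \<rho>))"
        by (rule par_suff[OF fX kEX tEX pj_ex[OF fX WX pP] pj_ex[OF fX WX pQ] c density_pos[OF d]])
    qed
    have sF: "sat_par V W F P Q"
      using le sE fW pP pQ by (simp add: le_P_def pj_projector)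
    have kFW: "kraus_cl W (ext_so V F) (map (ex V W) Fs)" by (rule kraus_ext[OF fW VW kF])
    have HF: "\<forall>\<rho>. density W \<rho> \<longrightarrow> Re (qtrace W (mmul W P \<rho>))
              \<le> Re (qtrace W (mmul W Q (ext_so V F \<rho>))) + Re (qtrace W \<rho>) - Re (qtrace W (ext_so V F \<rho>))"
    proof -
      have "V \<union> W \<subseteq> W" using VW by auto
      hence "\<forall>\<rho>. density W \<rho> \<longrightarrow> Re (qtrace W (mmul W (ex W W P) \<rho>))
              \<le> Re (qtrace W (mmul W (ex W W Q) (ext_so V F \<rho>))) + Re (qtrace W \<rho>) - Re (qtrace W (ext_so V F \<rho>))"
        using sF fW unfolding sat_par_ex by blast
      thus ?thesis by (simp add: ex_same_pj[OF pP] ex_same_pj[OF pQ])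
    qed
    have "mmul W (Idm W - Q) (mmul W (ex V W L) P) = 0"
      using par_nec[OF fW kFW pP pQ HF] L by simp
    hence "frob V M (mmul V L (Idm V)) = 0" using tb by blast
    thus False using M2' by simp
  qed
  hence "clip V ` set Fs \<subseteq> cspan (clip V ` set Es)" by auto
  thus ?thesis unfolding cspan_eq by (intro qv.span_minimal) auto
qed


lemma DT_E:
  assumes fV: "finite V" and kE: "is_kraus V E Es" and tE: "trace_nonincreasing V E"
  shows "mmul V (DV V Es) (term_proj V E) = 0"
proof (rule DT_zero[OF fV term_proj_ok(1)[OF fV kE tE] _ cl_DV])
  fix \<psi> assume vi: "vec_in V \<psi>" and fx: "apply_op V (term_proj V E) \<psi> = \<psi>"
  hence "\<psi> \<in> term_space V E" using term_proj_ok(2)[OF fV kE tE vi] by simp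
  thus "\<forall>s\<in>asg V. apply_op V (DV V Es) \<psi> s = 0" using term_space_iff[OF fV kE tE] by (simp add: DV_def)
qed

lemma mmul_ex_pair: "finite X \<Longrightarrow> V \<subseteq> X \<Longrightarrow> mmul X (ex V X K) (mmul X (ex V X T) A) = mmul X (ex V X (mmul V K T)) A"
  by (simp add: mmul_assoc[symmetric] ex_mmul)

lemma dir2b1:
  assumes fV: "finite V" and kE: "is_kraus V E Es" and tE: "trace_nonincreasing V E"
    and kF: "is_kraus V F Fs" and tF: "trace_nonincreasing V F"
    and le: "le_T V E F"
  shows "term_space V E \<subseteq> term_space V F"
proof -
  define T where "T = term_proj V E"
  have pT: "pj V T" unfolding T_def by (rule term_proj_ok(1)[OF fV kE tE])
  have DTE: "mmul V (DV V Es) T = 0" unfolding T_def by (rule DT_E[OF fV kE tE])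
  have sE: "sat_tot V V E T (Idm V)" unfolding sat_tot_ex
  proof (intro allI impI)
    fix X \<rho> assume fX: "finite X" and VVX: "V \<union> V \<subseteq> X" and d: "density X \<rho>"
    have VX: "V \<subseteq> X" using VVX by auto
    have kEX: "kraus_cl X (ext_so V E) (map (ex V X) Es)" by (rule kraus_ext[OF fX VX kE])
    have eI: "ex V X (Idm V) = Idm X" by (rule ex_Idm[OF fX VX])
    have c: "\<forall>K\<in>set (map (ex V X) Es). mmul X (Idm X - ex V X (Idm V)) (mmul X K (ex V X T)) = 0"
      by (simp add: eI)
    have dd: "mmul X (Idm X - kmat X (map (ex V X) Es)) (ex V X T) = 0"
      by (simp add: DX[OF fX VX] ex_mmul[OF fX VX] DTE ex_zero)
    show "Re (qtrace X (mmul X (ex V X T) \<rho>)) \<le> Re (qtrace X (mmul X (ex V X (Idm V)) (ext_so V E \<rho>)))"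
      by (rule tot_suff[OF fX kEX pj_ex[OF fX VX pT] pj_ex[OF fX VX pj_Idm[OF fV]] c dd density_pos[OF d]])
  qed
  have sF: "sat_tot V V F T (Idm V)"
    using le sE fV pT pj_Idm[OF fV] by (simp add: le_T_def pj_projector)
  have kFV: "kraus_cl V (ext_so V F) (map (ex V V) Fs)" by (rule kraus_ext[OF fV order_refl kF])
  have tFV: "tn V (ext_so V F)" by (rule tn_ext[OF fV order_refl kF tF])
  have HF: "\<forall>\<rho>. density V \<rho> \<longrightarrow> Re (qtrace V (mmul V T \<rho>)) \<le> Re (qtrace V (mmul V (Idm V) (ext_so V F \<rho>)))"
  proof -
    have "\<forall>\<rho>. density V \<rho> \<longrightarrow> Re (qtrace V (mmul V (ex V V T) \<rho>)) \<le> Re (qtrace V (mmul V (ex V V (Idm V)) (ext_so V F \<rho>)))"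
      using sF fV unfolding sat_tot_ex by blast
    thus ?thesis by (simp add: ex_same_pj[OF pT] ex_same_pj[OF pj_Idm[OF fV]])
  qed
  have "mmul V (Idm V - kmat V (map (ex V V) Fs)) T = 0"
    by (rule tot_nec(2)[OF fV kFV tFV pT pj_Idm[OF fV] HF])
  hence DTF: "mmul V (DV V Fs) T = 0" by (simp add: DV_def map_ex_same)
  show ?thesis
  proof
    fix \<psi> assume a: "\<psi> \<in> term_space V E"
    hence vi: "vec_in V \<psi>" by (simp add: term_space_def)
    have fx: "apply_op V T \<psi> = \<psi>" using term_proj_ok(2)[OF fV kE tE vi] a by (simp add: T_def)
    have "apply_op V (DV V Fs) \<psi> = apply_op V (mmul V (DV V Fs) T) \<psi>" using fx by (simp add: apply_mmul)
    hence "\<forall>s\<in>asg V. apply_op V (DV V Fs) \<psi> s = 0" using DTF by (simp add: apply_op_def)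
    thus "\<psi> \<in> term_space V F" using term_space_iff[OF fV kF tF] vi by (simp add: DV_def)
  qed
qed

lemma dir2b2:
  assumes fV: "finite V" and kE: "is_kraus V E Es" and tE: "trace_nonincreasing V E"
    and kF: "is_kraus V F Fs" and tF: "trace_nonincreasing V F"
    and le: "le_T V E F"
  shows "cspan (clip V ` set (map (\<lambda>K. mmul V K (term_proj V E)) Fs))
           \<subseteq> cspan (clip V ` set (map (\<lambda>K. mmul V K (term_proj V E)) Es))"
proof -
  define T where "T = term_proj V E"
  have pT: "pj V T" unfolding T_def by (rule term_proj_ok(1)[OF fV kE tE])
  have DTE: "mmul V (DV V Es) T = 0" unfolding T_def by (rule DT_E[OF fV kE tE])
  have "clip V (mmul V L T) \<in> cspan (clip V ` set (map (\<lambda>K. mmul V K T) Es))" if L: "L \<in> set Fs" for L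
  proof (rule ccontr)
    assume n: "clip V (mmul V L T) \<notin> cspan (clip V ` set (map (\<lambda>K. mmul V K T) Es))"
    obtain M where M1: "\<forall>K\<in>set (map (\<lambda>K. mmul V K T) Es). frob V M K = 0" and M2: "frob V M (mmul V L T) \<noteq> 0"
      using sep_mat[OF fV _ n] by blast
    obtain W P Q where fW: "finite W" and VW: "V \<subseteq> W" and pP: "pj W P" and pQ: "pj W Q"
      and tb: "\<forall>K. mmul W (Idm W - Q) (mmul W (ex V W K) P) = 0 \<longleftrightarrow> frob V M (mmul V K T) = 0"
      and tc: "\<forall>D. mmul V D T = 0 \<longrightarrow> mmul W (ex V W D) P = 0"
      using test_construct[OF fV pT M2] by blast
    have sE: "sat_tot V W E P Q" unfolding sat_tot_ex
    proof (intro allI impI)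
      fix X \<rho> assume fX: "finite X" and VWX: "V \<union> W \<subseteq> X" and d: "density X \<rho>"
      have VX: "V \<subseteq> X" and WX: "W \<subseteq> X" using VWX by auto
      have kEX: "kraus_cl X (ext_so V E) (map (ex V X) Es)" by (rule kraus_ext[OF fX VX kE])
      have c: "\<forall>K\<in>set (map (ex V X) Es). mmul X (Idm X - ex W X Q) (mmul X K (ex W X P)) = 0"
      proof
        fix K' assume "K' \<in> set (map (ex V X) Es)"
        then obtain K where K: "K \<in> set Es" "K' = ex V X K" by auto
        have "mmul W (Idm W - Q) (mmul W (ex V W K) P) = 0" using M1 K tb by simp
        thus "mmul X (Idm X - ex W X Q) (mmul X K' (ex W X P)) = 0"
          using K by (simp add: lift_cond[OF fX VW WX] ex_zero)
      qed
      have dd: "mmul X (Idm X - kmat X (map (ex V X) Es)) (ex W X P) = 0"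
      proof -
        have "mmul X (Idm X - kmat X (map (ex V X) Es)) (ex W X P) = mmul X (ex W X (ex V W (DV V Es))) (ex W X P)"
          by (simp add: DX[OF fX VX] ex_trans[OF VW WX])
        also have "\<dots> = ex W X (mmul W (ex V W (DV V Es)) P)" by (rule ex_mmul[OF fX WX])
        also have "\<dots> = 0" using tc DTE by (simp add: ex_zero)
        finally show ?thesis .
      qed
      show "Re (qtrace X (mmul X (ex W X P) \<rho>)) \<le> Re (qtrace X (mmul X (ex W X Q) (ext_so V E \<rho>)))"
        by (rule tot_suff[OF fX kEX pj_ex[OF fX WX pP] pj_ex[OF fX WX pQ] c dd density_pos[OF d]])
    qed
    have sF: "sat_tot V W F P Q"
      using le sE fW pP pQ by (simp add: le_T_def pj_projector)
    have kFW: "kraus_cl W (ext_so V F) (map (ex V W) Fs)" by (rule kraus_ext[OF fW VW kF])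
    have tFW: "tn W (ext_so V F)" by (rule tn_ext[OF fW VW kF tF])
    have HF: "\<forall>\<rho>. density W \<rho> \<longrightarrow> Re (qtrace W (mmul W P \<rho>)) \<le> Re (qtrace W (mmul W Q (ext_so V F \<rho>)))"
    proof -
      have "V \<union> W \<subseteq> W" using VW by auto
      hence "\<forall>\<rho>. density W \<rho> \<longrightarrow> Re (qtrace W (mmul W (ex W W P) \<rho>))
              \<le> Re (qtrace W (mmul W (ex W W Q) (ext_so V F \<rho>)))"
        using sF fW unfolding sat_tot_ex by blast
      thus ?thesis by (simp add: ex_same_pj[OF pP] ex_same_pj[OF pQ])
    qed
    have "mmul W (Idm W - Q) (mmul W (ex V W L) P) = 0"
      using tot_nec(1)[OF fW kFW tFW pP pQ HF] L by simp
    hence "frob V M (mmul V L T) = 0" using tb by blast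
    thus False using M2 by simp
  qed
  hence "clip V ` set (map (\<lambda>K. mmul V K T) Fs) \<subseteq> cspan (clip V ` set (map (\<lambda>K. mmul V K T) Es))" by auto
  thus ?thesis unfolding cspan_eq T_def by (intro qv.span_minimal) auto
qed

lemma dir2a:
  assumes fV: "finite V" and kE: "is_kraus V E Es" and tE: "trace_nonincreasing V E"
    and kF: "is_kraus V F Fs" and tF: "trace_nonincreasing V F"
    and sub: "term_space V E \<subseteq> term_space V F"
    and sp: "cspan (clip V ` set (map (\<lambda>K. mmul V K (term_proj V E)) Fs))
           \<subseteq> cspan (clip V ` set (map (\<lambda>K. mmul V K (term_proj V E)) Es))"
  shows "le_T V E F"
  unfolding le_T_def
proof (intro allI impI)
  define T where "T = term_proj V E"
  have pT: "pj V T" unfolding T_def by (rule term_proj_ok(1)[OF fV kE tE])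
  have DTF: "mmul V (DV V Fs) T = 0"
  proof (rule DT_zero[OF fV pT _ cl_DV])
    fix \<psi> assume vi: "vec_in V \<psi>" and fx: "apply_op V T \<psi> = \<psi>"
    hence "\<psi> \<in> term_space V E" using term_proj_ok(2)[OF fV kE tE vi] by (simp add: T_def)
    hence "\<psi> \<in> term_space V F" using sub by blast
    thus "\<forall>s\<in>asg V. apply_op V (DV V Fs) \<psi> s = 0" using term_space_iff[OF fV kF tF] by (simp add: DV_def)
  qed
  fix W P Q assume fW: "finite W" and pP: "projector W P" and pQ: "projector W Q"
    and sE: "sat_tot V W E P Q"
  show "sat_tot V W F P Q" unfolding sat_tot_ex
  proof (intro allI impI)
    fix X \<rho> assume fX: "finite X" and VWX: "V \<union> W \<subseteq> X" and d: "density X \<rho>"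
    have VX: "V \<subseteq> X" and WX: "W \<subseteq> X" using VWX by auto
    define A where "A = ex W X P"
    define B where "B = ex W X Q"
    have pA: "pj X A" unfolding A_def by (rule projector_ex[OF fX WX pP])
    have pB: "pj X B" unfolding B_def by (rule projector_ex[OF fX WX pQ])
    have kEX: "kraus_cl X (ext_so V E) (map (ex V X) Es)" by (rule kraus_ext[OF fX VX kE])
    have tEX: "tn X (ext_so V E)" by (rule tn_ext[OF fX VX kE tE])
    have kFX: "kraus_cl X (ext_so V F) (map (ex V X) Fs)" by (rule kraus_ext[OF fX VX kF])
    have HE: "\<forall>\<rho>. density X \<rho> \<longrightarrow> Re (qtrace X (mmul X A \<rho>)) \<le> Re (qtrace X (mmul X B (ext_so V E \<rho>)))"
      using sE fX VWX unfolding sat_tot_ex A_def B_def by blast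
    have n1: "mmul X (Idm X - B) (mmul X (ex V X K) A) = 0" if "K \<in> set Es" for K
      using tot_nec(1)[OF fX kEX tEX pA pB HE] that by simp
    have n2: "mmul X (ex V X (DV V Es)) A = 0"
      using tot_nec(2)[OF fX kEX tEX pA pB HE] by (simp add: DX[OF fX VX])
    have TA: "mmul X (ex V X T) A = A"
    proof (rule slice_fix[OF fX VX pT pA _ n2])
      fix \<psi> assume vi: "vec_in V \<psi>" and z: "\<forall>s\<in>asg V. apply_op V (DV V Es) \<psi> s = 0"
      hence "\<psi> \<in> term_space V E" using term_space_iff[OF fV kE tE] by (simp add: DV_def)
      thus "apply_op V T \<psi> = \<psi>" using term_proj_ok(2)[OF fV kE tE vi] by (simp add: T_def)
    qed
    have dd: "mmul X (Idm X - kmat X (map (ex V X) Fs)) A = 0"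
    proof -
      have "mmul X (Idm X - kmat X (map (ex V X) Fs)) A = mmul X (ex V X (DV V Fs)) (mmul X (ex V X T) A)"
        by (simp add: DX[OF fX VX] TA)
      also have "\<dots> = 0" by (simp add: mmul_ex_pair[OF fX VX] DTF ex_zero)
      finally show ?thesis .
    qed
    have Zs: "clip V ` set (map (\<lambda>K. mmul V K T) Es) \<subseteq> {N. mmul X (Idm X - B) (mmul X (ex V X N) A) = 0}"
    proof
      fix N assume "N \<in> clip V ` set (map (\<lambda>K. mmul V K T) Es)"
      then obtain K where K: "K \<in> set Es" "N = clip V (mmul V K T)" by auto
      have "mmul X (ex V X N) A = mmul X (ex V X K) A"
        using K TA by (simp add: ex_clip mmul_ex_pair[OF fX VX, symmetric])
      thus "N \<in> {N. mmul X (Idm X - B) (mmul X (ex V X N) A) = 0}" using n1 K by simp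
    qed
    have c: "\<forall>K\<in>set (map (ex V X) Fs). mmul X (Idm X - B) (mmul X K A) = 0"
    proof
      fix K' assume "K' \<in> set (map (ex V X) Fs)"
      then obtain L where L: "L \<in> set Fs" "K' = ex V X L" by auto
      have "clip V (mmul V L T) \<in> cspan (clip V ` set (map (\<lambda>K. mmul V K T) Es))"
        using sp L(1) qv.span_superset[of "clip V ` set (map (\<lambda>K. mmul V K T) Fs)"]
        unfolding cspan_eq T_def by auto
      hence "mmul X (Idm X - B) (mmul X (ex V X (clip V (mmul V L T))) A) = 0" by (rule Z_span[OF Zs])
      moreover have "mmul X (ex V X (clip V (mmul V L T))) A = mmul X (ex V X L) A"
        using TA by (simp add: ex_clip mmul_ex_pair[OF fX VX, symmetric])
      ultimately show "mmul X (Idm X - B) (mmul X K' A) = 0" using L by simp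
    qed
    have "Re (qtrace X (mmul X A \<rho>)) \<le> Re (qtrace X (mmul X B (ext_so V F \<rho>)))"
      by (rule tot_suff[OF fX kFX pA pB c dd density_pos[OF d]])
    thus "Re (qtrace X (mmul X (ex W X P) \<rho>)) \<le> Re (qtrace X (mmul X (ex W X Q) (ext_so V F \<rho>)))"
      by (simp add: A_def B_def)
  qed
qed


lemma apply_Idm_vec_in: "finite V \<Longrightarrow> vec_in V \<psi> \<Longrightarrow> apply_op V (Idm V) \<psi> = \<psi>"
proof (rule ext)
  fix s assume f: "finite V" and vi: "vec_in V \<psi>"
  show "apply_op V (Idm V) \<psi> s = \<psi> s"
  proof (cases "s \<in> asg V")
    case True thus ?thesis using apply_Idm[OF f True] by simp
  next
    case False thus ?thesis using vi by (simp add: apply_op_def Idm_def clip_def vec_in_def)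
  qed
qed

lemma clip_img_Idm: "finite V \<Longrightarrow> clip V ` set (map (\<lambda>K. mmul V K (Idm V)) Fs) = clip V ` set Fs"
  by (simp add: image_image clip_mmul_Idm)

theorem theorem4p7:
  fixes V :: "nat set" and E F :: superop
  assumes "finite V" and "E \<in> DProg V" and "F \<in> DProg V"
  shows "(le_P V E F \<longleftrightarrow> kraus_span V F \<subseteq> kraus_span V E)
    \<and> (le_T V E F \<longleftrightarrow> term_space V E \<subseteq> term_space V F
          \<and> kraus_span V (F \<circ> proj_so V (term_proj V E))
              \<subseteq> kraus_span V (E \<circ> proj_so V (term_proj V E)))
    \<and> (trace_preserving V E \<and> trace_preserving V F \<longrightarrow> (le_T V E F \<longleftrightarrow> le_P V E F))"
proof -
  note fV = assms(1)
  obtain Es where kE: "is_kraus V E Es" and tE: "trace_nonincreasing V E"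
    using assms(2) by (auto simp: DProg_def completely_positive_def)
  obtain Fs where kF: "is_kraus V F Fs" and tF: "trace_nonincreasing V F"
    using assms(3) by (auto simp: DProg_def completely_positive_def)
  define T where "T = term_proj V E"
  have pT: "pj V T" unfolding T_def by (rule term_proj_ok(1)[OF fV kE tE])
  have ksE: "kraus_span V E = cspan (clip V ` set Es)" by (rule kraus_span_eq[OF fV kE])
  have ksF: "kraus_span V F = cspan (clip V ` set Fs)" by (rule kraus_span_eq[OF fV kF])
  have ksET: "kraus_span V (E \<circ> proj_so V T) = cspan (clip V ` set (map (\<lambda>K. mmul V K T) Es))"
    by (rule kraus_span_eq[OF fV kraus_comp[OF kE pT]])
  have ksFT: "kraus_span V (F \<circ> proj_so V T) = cspan (clip V ` set (map (\<lambda>K. mmul V K T) Fs))"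
    by (rule kraus_span_eq[OF fV kraus_comp[OF kF pT]])
  have p1: "le_P V E F \<longleftrightarrow> kraus_span V F \<subseteq> kraus_span V E"
    unfolding ksE ksF using dir1a[OF fV kE tE kF tF] dir1b[OF fV kE tE kF tF] by blast
  have p2: "le_T V E F \<longleftrightarrow> term_space V E \<subseteq> term_space V F
          \<and> kraus_span V (F \<circ> proj_so V T) \<subseteq> kraus_span V (E \<circ> proj_so V T)"
    unfolding ksET ksFT unfolding T_def
    using dir2a[OF fV kE tE kF tF] dir2b1[OF fV kE tE kF tF] dir2b2[OF fV kE tE kF tF] by blast
  have p3: "le_T V E F \<longleftrightarrow> le_P V E F" if tp: "trace_preserving V E" "trace_preserving V F"
  proof -
    have TEa: "term_space V E = {\<psi>. vec_in V \<psi>}" using tp(1) by (auto simp: term_space_def trace_preserving_def)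
    have TFa: "term_space V F = {\<psi>. vec_in V \<psi>}" using tp(2) by (auto simp: term_space_def trace_preserving_def)
    have TI: "T = Idm V"
    proof (rule proj_unique[OF fV pT pj_Idm[OF fV]])
      fix \<psi> assume vi: "vec_in V \<psi>"
      show "apply_op V T \<psi> = \<psi> \<longleftrightarrow> apply_op V (Idm V) \<psi> = \<psi>"
        using term_proj_ok(2)[OF fV kE tE vi] TEa vi apply_Idm_vec_in[OF fV vi] by (simp add: T_def)
    qed
    have "kraus_span V (F \<circ> proj_so V T) = kraus_span V F"
      using ksFT ksF TI clip_img_Idm[OF fV] by simp
    moreover have "kraus_span V (E \<circ> proj_so V T) = kraus_span V E"
      using ksET ksE TI clip_img_Idm[OF fV] by simp
    ultimately show ?thesis using p1 p2 TEa TFa by simp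
  qed
  show ?thesis using p1 p2 p3 by (simp add: T_def)
qed


end
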